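(* Let $V=\mathbb{C}^{m\times n}$ viewed as a real vector space with inner product $\langle A,B\rangle=\Re\operatorname{trace}(AB^\star)$, and let $\|\cdot\|_X=\|\cdot\|_\star$ be the nuclear norm and $\|\cdot\|_Y=\|\cdot\|_\sigma$ the spectral norm (these are dual to each other). Let $C\in V$ be nonzero with distinct nonzero singular values $\lambda_1>\lambda_2>\cdots>\lambda_r>0$ of multiplicities $m_1,\dots,m_r$, and write $C=WDU^\star$ with $W,U$ unitary and $D$ the $m\times n$ matrix with diagonal $(\lambda_1I_{m_1},\dots,\lambda_rI_{m_r},0,\dots,0)$. Put $k_j=m_1+\cdots+m_j$, $\lambda_{r+1}=0$ and $C^{(j)}=(\lambda_j-\lambda_{j+1})\,W\begin{pmatrix}I_{k_j}&0\\0&0\end{pmatrix}U^\star$ for $j=1,\dots,r$. Then $C=C^{(1)}+\cdots+C^{(r)}$ is an $XY$-slope decomposition, with $\|C^{(j)}\|_\sigma=\lambda_j-\lambda_{j+1}$, $\|C^{(j)}\|_\star=k_j(\lambda_j-\lambda_{j+1})$. In particular every matrix is tight, i.e. the nuclear and spectral norms are tight.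
   Context: $A^\star$ is the conjugate transpose. Nuclear norm: $\|A\|_\star=\operatorname{trace}\sqrt{A^\star A}$ = sum of singular values; spectral norm: $\|A\|_\sigma=\max\{\|Av\|_2:\|v\|_2=1\}$ = largest singular value. For nonzero $v$, $\mu_{XY}(v)=\|v\|_Y/\|v\|_X$. An expression $c=c_1+\cdots+c_r$ is an $XY$-slope decomposition if all $c_i$ are nonzero, $\langle c_i,c_j\rangle=\|c_i\|_X\|c_j\|_Y$ for all $i\le j$, and $\mu_{XY}(c_1)>\cdots>\mu_{XY}(c_r)$. A vector $c$ is tight if every $X2$-decomposition of it is an $XY$-decomposition, where for norms $\|\cdot\|_P,\|\cdot\|_Q$, $c=a+b$ is a $PQ$-decomposition if for every decomposition $c=a'+b'$: $\|a'\|_P>\|a\|_P$, or $\|b'\|_Q>\|b\|_Q$, or $(\|a'\|_P,\|b'\|_Q)=(\|a\|_P,\|b\|_Q)$. *)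

theory Defs
  imports Complex_Main "Jordan_Normal_Form.Matrix"
begin

text \<open>Complex matrices are Jordan_Normal_Form matrices of type complex mat; the space
  V = C^(m x n) is carrier_mat m n, regarded as a real vector space.\<close>

definition cT :: "complex mat \<Rightarrow> complex mat" where
  "cT A = mat (dim_col A) (dim_row A) (\<lambda>(i,j). cnj (A $$ (j,i)))"

definition unitary_mat :: "nat \<Rightarrow> complex mat \<Rightarrow> bool" where
  "unitary_mat n U \<longleftrightarrow> U \<in> carrier_mat n n \<and> U * cT U = 1\<^sub>m n \<and> cT U * U = 1\<^sub>m n"

definition mtrace :: "complex mat \<Rightarrow> complex" where
  "mtrace A = (\<Sum>i<dim_row A. A $$ (i,i))"

definition innerV :: "complex mat \<Rightarrow> complex mat \<Rightarrow> real" where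
  "innerV A B = Re (mtrace (A * cT B))"

definition norm2V :: "complex mat \<Rightarrow> real" where
  "norm2V A = sqrt (innerV A A)"

definition vnorm :: "complex vec \<Rightarrow> real" where
  "vnorm v = sqrt (\<Sum>i<dim_vec v. (cmod (v $ i))\<^sup>2)"

definition spectral_norm :: "complex mat \<Rightarrow> real" where
  "spectral_norm A = Sup {vnorm (A *\<^sub>v v) | v. v \<in> carrier_vec (dim_col A) \<and> vnorm v = 1}"

definition psd_mat :: "nat \<Rightarrow> complex mat \<Rightarrow> bool" where
  "psd_mat n P \<longleftrightarrow> P \<in> carrier_mat n n \<and> cT P = P \<and>
     (\<forall>v \<in> carrier_vec n. 0 \<le> Re (\<Sum>i<n. \<Sum>j<n. cnj (v $ i) * P $$ (i,j) * v $ j))"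

definition msqrt :: "complex mat \<Rightarrow> complex mat" where
  "msqrt A = (THE P. psd_mat (dim_row A) P \<and> P * P = A)"

definition nuclear_norm :: "complex mat \<Rightarrow> real" where
  "nuclear_norm A = Re (mtrace (msqrt (cT A * A)))"

definition slope :: "(complex mat \<Rightarrow> real) \<Rightarrow> (complex mat \<Rightarrow> real) \<Rightarrow> complex mat \<Rightarrow> real" where
  "slope X Y v = Y v / X v"

definition slope_decomp ::
  "(complex mat \<Rightarrow> real) \<Rightarrow> (complex mat \<Rightarrow> real) \<Rightarrow> nat \<Rightarrow> nat \<Rightarrow> complex mat \<Rightarrow> complex mat list \<Rightarrow> bool" where
  "slope_decomp X Y m n c cs \<longleftrightarrow>
     (\<forall>x \<in> set cs. x \<in> carrier_mat m n \<and> x \<noteq> 0\<^sub>m m n) \<and>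
     c = foldr (+) cs (0\<^sub>m m n) \<and>
     (\<forall>i j. i \<le> j \<and> j < length cs \<longrightarrow> innerV (cs ! i) (cs ! j) = X (cs ! i) * Y (cs ! j)) \<and>
     (\<forall>i. Suc i < length cs \<longrightarrow> slope X Y (cs ! i) > slope X Y (cs ! Suc i))"

definition pq_decomp ::
  "(complex mat \<Rightarrow> real) \<Rightarrow> (complex mat \<Rightarrow> real) \<Rightarrow> nat \<Rightarrow> nat \<Rightarrow> complex mat \<Rightarrow> complex mat \<Rightarrow> complex mat \<Rightarrow> bool" where
  "pq_decomp P Q m n c a b \<longleftrightarrow>
     a \<in> carrier_mat m n \<and> b \<in> carrier_mat m n \<and> c = a + b \<and>
     (\<forall>a' b'. a' \<in> carrier_mat m n \<and> b' \<in> carrier_mat m n \<and> c = a' + b' \<longrightarrow>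
        P a' > P a \<or> Q b' > Q b \<or> (P a', Q b') = (P a, Q b))"

definition tight ::
  "(complex mat \<Rightarrow> real) \<Rightarrow> (complex mat \<Rightarrow> real) \<Rightarrow> nat \<Rightarrow> nat \<Rightarrow> complex mat \<Rightarrow> bool" where
  "tight X Y m n c \<longleftrightarrow> (\<forall>a b. pq_decomp X norm2V m n c a b \<longrightarrow> pq_decomp X Y m n c a b)"

definition ksum :: "(nat \<Rightarrow> nat) \<Rightarrow> nat \<Rightarrow> nat" where
  "ksum mu j = (\<Sum>i=1..j. mu i)"

definition svd_diag :: "nat \<Rightarrow> nat \<Rightarrow> nat \<Rightarrow> (nat \<Rightarrow> real) \<Rightarrow> (nat \<Rightarrow> nat) \<Rightarrow> complex mat" where
  "svd_diag m n r lam mu = mat m n (\<lambda>(i,l). if i = l then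
      (\<Sum>j=1..r. if ksum mu (j - 1) \<le> i \<and> i < ksum mu j then complex_of_real (lam j) else 0) else 0)"

definition block_id :: "nat \<Rightarrow> nat \<Rightarrow> nat \<Rightarrow> complex mat" where
  "block_id m n k = mat m n (\<lambda>(i,l). if i = l \<and> i < k then 1 else 0)"

definition gap :: "nat \<Rightarrow> (nat \<Rightarrow> real) \<Rightarrow> nat \<Rightarrow> real" where
  "gap r lam j = lam j - (if j = r then 0 else lam (Suc j))"

definition Cpart :: "nat \<Rightarrow> nat \<Rightarrow> nat \<Rightarrow> (nat \<Rightarrow> real) \<Rightarrow> (nat \<Rightarrow> nat) \<Rightarrow> complex mat \<Rightarrow> complex mat \<Rightarrow> nat \<Rightarrow> complex mat" where
  "Cpart m n r lam mu W U j = complex_of_real (gap r lam j) \<cdot>\<^sub>m (W * block_id m n (ksum mu j) * cT U)"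

end

theory Submission
  imports Defs "Jordan_Normal_Form.Spectral_Radius" "Jordan_Normal_Form.Gram_Schmidt"
begin


lemma cT_carrier[simp]: "A \<in> carrier_mat m n \<Longrightarrow> cT A \<in> carrier_mat n m"
  unfolding cT_def by auto
lemma cT_dim[simp]: "dim_row (cT A) = dim_col A" "dim_col (cT A) = dim_row A"
  unfolding cT_def by auto
lemma cT_index[simp]: "i < dim_col A \<Longrightarrow> j < dim_row A \<Longrightarrow> cT A $$ (i,j) = cnj (A $$ (j,i))"
  unfolding cT_def by auto
lemma cT_cT[simp]: "cT (cT A) = A"
  by (rule eq_matI) auto

lemma mult_index: "A \<in> carrier_mat m k \<Longrightarrow> B \<in> carrier_mat k n \<Longrightarrow> i < m \<Longrightarrow> j < n \<Longrightarrow>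
  (A*B) $$ (i,j) = (\<Sum>l<k. A $$ (i,l) * B $$ (l,j))"
  by (simp add: scalar_prod_def atLeast0LessThan)

lemma mult_vec_index: "A \<in> carrier_mat m k \<Longrightarrow> v \<in> carrier_vec k \<Longrightarrow> i < m \<Longrightarrow>
  (A *\<^sub>v v) $ i = (\<Sum>l<k. A $$ (i,l) * v $ l)"
  by (simp add: scalar_prod_def atLeast0LessThan)

lemma cT_mult: "A \<in> carrier_mat m k \<Longrightarrow> B \<in> carrier_mat k n \<Longrightarrow> cT (A*B) = cT B * cT A"
  by (rule eq_matI) (auto simp: scalar_prod_def cnj_sum mult.commute intro!: sum.cong)

lemma cT_add: "A \<in> carrier_mat m n \<Longrightarrow> B \<in> carrier_mat m n \<Longrightarrow> cT (A + B) = cT A + cT B"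
  by (rule eq_matI) auto
lemma cT_minus: "A \<in> carrier_mat m n \<Longrightarrow> B \<in> carrier_mat m n \<Longrightarrow> cT (A - B) = cT A - cT B"
  by (rule eq_matI) auto
lemma cT_smult: "cT (c \<cdot>\<^sub>m A) = cnj c \<cdot>\<^sub>m cT A"
  by (rule eq_matI) auto
lemma cT_zero[simp]: "cT (0\<^sub>m m n) = 0\<^sub>m n m"
  by (rule eq_matI) auto
lemma cT_one[simp]: "cT (1\<^sub>m n) = 1\<^sub>m n"
  by (rule eq_matI) auto

lemma mtrace_comm: "A \<in> carrier_mat m n \<Longrightarrow> B \<in> carrier_mat n m \<Longrightarrow> mtrace (A*B) = mtrace (B*A)"
  unfolding mtrace_def
  apply (simp add: scalar_prod_def atLeast0LessThan)
  apply (subst sum.swap) apply (simp add: mult.commute)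
  done

lemma innerV_sum: "A \<in> carrier_mat m n \<Longrightarrow> B \<in> carrier_mat m n \<Longrightarrow>
  innerV A B = (\<Sum>i<m. \<Sum>j<n. Re (A $$ (i,j) * cnj (B $$ (i,j))))"
  unfolding innerV_def mtrace_def
  by (simp add: scalar_prod_def atLeast0LessThan Re_sum)


definition ip :: "nat \<Rightarrow> complex vec \<Rightarrow> complex vec \<Rightarrow> complex" where
  "ip n x y = (\<Sum>i<n. x $ i * cnj (y $ i))"

definition qf :: "nat \<Rightarrow> complex mat \<Rightarrow> complex vec \<Rightarrow> complex" where
  "qf n P v = (\<Sum>i<n. \<Sum>j<n. cnj (v $ i) * P $$ (i,j) * v $ j)"

lemma ip_adj: assumes "A \<in> carrier_mat m n" "x \<in> carrier_vec n" "y \<in> carrier_vec m"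
  shows "ip m (A *\<^sub>v x) y = ip n x (cT A *\<^sub>v y)"
proof -
  have "ip m (A *\<^sub>v x) y = (\<Sum>i<m. \<Sum>l<n. A $$ (i,l) * x $ l * cnj (y $ i))"
    unfolding ip_def using assms by (simp add: scalar_prod_def atLeast0LessThan sum_distrib_right)
  also have "\<dots> = (\<Sum>l<n. \<Sum>i<m. A $$ (i,l) * x $ l * cnj (y $ i))" by (rule sum.swap)
  also have "\<dots> = ip n x (cT A *\<^sub>v y)"
    unfolding ip_def using assms by (simp add: scalar_prod_def atLeast0LessThan sum_distrib_left cnj_sum mult_ac)
  finally show ?thesis .
qed

lemma qf_ip: assumes "P \<in> carrier_mat n n" "v \<in> carrier_vec n"
  shows "qf n P v = ip n (P *\<^sub>v v) v"
  unfolding qf_def ip_def using assms by (simp add: scalar_prod_def atLeast0LessThan sum_distrib_left mult_ac)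

lemma ip_self: "ip n v v = complex_of_real (\<Sum>i<n. (cmod (v $ i))\<^sup>2)"
  unfolding ip_def of_real_sum by (intro sum.cong) (auto, metis complex_norm_square of_real_power)

lemma sumsq_nonneg: "0 \<le> (\<Sum>i<n. (cmod (v $ i))\<^sup>2)" by (rule sum_nonneg) simp

lemma vnorm_sq: "v \<in> carrier_vec n \<Longrightarrow> (vnorm v)\<^sup>2 = (\<Sum>i<n. (cmod (v $ i))\<^sup>2)"
  unfolding vnorm_def using sumsq_nonneg[where n=n and v=v] by simp

lemma vnorm_sq_ip: "v \<in> carrier_vec n \<Longrightarrow> complex_of_real ((vnorm v)\<^sup>2) = ip n v v"
  by (simp add: vnorm_sq ip_self)

lemma vnorm_nonneg[simp]: "vnorm v \<ge> 0" unfolding vnorm_def using sumsq_nonneg[where n="dim_vec v" and v=v] by simp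

lemma ip_sym: "ip n x y = cnj (ip n y x)"
  unfolding ip_def by (simp add: cnj_sum mult.commute)

lemma ip_add1: "x \<in> carrier_vec n \<Longrightarrow> z \<in> carrier_vec n \<Longrightarrow> ip n (x + z) y = ip n x y + ip n z y"
  unfolding ip_def by (simp add: distrib_right sum.distrib)
lemma ip_add2: "y \<in> carrier_vec n \<Longrightarrow> z \<in> carrier_vec n \<Longrightarrow> ip n x (y + z) = ip n x y + ip n x z"
  unfolding ip_def by (simp add: distrib_left sum.distrib)
lemma ip_smult1: "x \<in> carrier_vec n \<Longrightarrow> ip n (c \<cdot>\<^sub>v x) y = c * ip n x y"
  unfolding ip_def by (simp add: sum_distrib_left mult_ac)
lemma ip_smult2: "y \<in> carrier_vec n \<Longrightarrow> ip n x (c \<cdot>\<^sub>v y) = cnj c * ip n x y"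
  unfolding ip_def by (simp add: sum_distrib_left mult_ac)

lemma vnorm_mult_sq: assumes "B \<in> carrier_mat m n" "w \<in> carrier_vec n"
  shows "complex_of_real ((vnorm (B *\<^sub>v w))\<^sup>2) = qf n (cT B * B) w"
proof -
  have "qf n (cT B * B) w = ip n ((cT B * B) *\<^sub>v w) w"
    using qf_ip[of "cT B * B" n w] assms by (metis cT_carrier mult_carrier_mat)
  also have "(cT B * B) *\<^sub>v w = cT B *\<^sub>v (B *\<^sub>v w)" using assms by (metis assoc_mult_mat_vec cT_carrier)
  also have "ip n (cT B *\<^sub>v (B *\<^sub>v w)) w = cnj (ip n w (cT B *\<^sub>v (B *\<^sub>v w)))" by (rule ip_sym)
  also have "ip n w (cT B *\<^sub>v (B *\<^sub>v w)) = ip m (B *\<^sub>v w) (B *\<^sub>v w)" using assms by (simp add: ip_adj)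
  also have "\<dots> = complex_of_real ((vnorm (B *\<^sub>v w))\<^sup>2)"
    by (rule vnorm_sq_ip[symmetric]) (use assms in auto)
  finally show ?thesis by simp
qed


lemma unitary_from_left: assumes R: "R \<in> carrier_mat n n" and "cT R * R = 1\<^sub>m n"
  shows "unitary_mat n R"
  using assms mat_mult_left_right_inverse[of "cT R" n R] unfolding unitary_mat_def by auto

lemma unitary_completion: assumes u: "u \<in> carrier_vec n" and nu: "vnorm u = 1"
  shows "\<exists>R. unitary_mat n R \<and> col R 0 = u"
proof -
  interpret cof_vec_space n "TYPE(complex)" .
  have n: "n > 0" using u nu unfolding vnorm_def by (cases n) auto
  have u0: "u \<noteq> 0\<^sub>v n" using nu unfolding vnorm_def by auto
  define b where "b = basis_completion u"
  from basis_completion[OF u u0, folded b_def]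
  have dist_b: "distinct b" and indep: "\<not> lin_dep (set b)" and bc: "set b \<subseteq> carrier_vec n"
    and hdb: "hd b = u" and len_b: "length b = n" by auto
  from hdb len_b n obtain vs where bv: "b = u # vs" by (cases b, auto)
  define ws where "ws = gram_schmidt n b"
  from gram_schmidt_result[OF bc dist_b indep refl, folded ws_def]
  have ws: "set ws \<subseteq> carrier_vec n" "corthogonal ws" "length ws = n" by (auto simp: len_b)
  have hdws: "hd ws = u" unfolding ws_def bv using u by simp
  define nr where "nr = (\<lambda>w::complex vec. sqrt (Re (w \<bullet>c w)))"
  define ws' where "ws' = map (\<lambda>w. complex_of_real (1 / nr w) \<cdot>\<^sub>v w) ws"
  define R where "R = mat_of_cols n ws'"
  have wsi: "i < n \<Longrightarrow> ws ! i \<in> carrier_vec n" for i using ws by auto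
  have sp: "i < n \<Longrightarrow> ws ! i \<bullet>c ws ! i = complex_of_real ((nr (ws ! i))\<^sup>2)" for i
  proof -
    assume i: "i < n"
    have "ws ! i \<bullet>c ws ! i = complex_of_real (\<Sum>l<n. (cmod (ws ! i $ l))\<^sup>2)"
      using wsi[OF i] ip_self[of n "ws!i"] by (simp add: scalar_prod_def atLeast0LessThan ip_def)
    moreover have "0 \<le> (\<Sum>l<n. (cmod (ws ! i $ l))\<^sup>2)" by (rule sum_nonneg) simp
    ultimately show ?thesis unfolding nr_def by simp
  qed
  have nrpos: "i < n \<Longrightarrow> nr (ws ! i) > 0" for i
  proof -
    assume i: "i < n"
    have "ws ! i \<bullet>c ws ! i \<noteq> 0" using corthogonalD[OF ws(2), of i i] i ws(3) by auto
    hence "nr (ws ! i) \<noteq> 0" using sp[OF i] by auto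
    moreover have "nr (ws ! i) \<ge> 0" unfolding nr_def using sp[OF i] by simp
    ultimately show ?thesis by simp
  qed
  have R: "R \<in> carrier_mat n n" unfolding R_def ws'_def using ws by auto
  have RR: "cT R * R = 1\<^sub>m n"
  proof (rule eq_matI)
    fix i j assume i: "i < dim_row (1\<^sub>m n)" and j: "j < dim_col (1\<^sub>m n)"
    hence i: "i < n" and j: "j < n" by auto
    have "(cT R * R) $$ (i,j) = (\<Sum>l<n. cnj (R $$ (l,i)) * R $$ (l,j))"
      using R i j by (simp add: scalar_prod_def atLeast0LessThan)
    also have "\<dots> = complex_of_real (1 / nr (ws ! i) * (1 / nr (ws ! j))) * (ws ! j \<bullet>c ws ! i)"
      unfolding R_def ws'_def using i j ws wsi[OF i] wsi[OF j]
      by (simp add: mat_of_cols_index scalar_prod_def atLeast0LessThan sum_distrib_left mult_ac)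
    also have "\<dots> = 1\<^sub>m n $$ (i,j)"
    proof (cases "i = j")
      case True
      thus ?thesis using sp[OF j] nrpos[OF j] i by (simp add: power2_eq_square)
    next
      case False
      have "ws ! j \<bullet>c ws ! i = 0" using corthogonalD[OF ws(2), of j i] i j ws(3) False by auto
      thus ?thesis using False i j by simp
    qed
    finally show "(cT R * R) $$ (i,j) = 1\<^sub>m n $$ (i,j)" .
  qed (use R in auto)
  have "col R 0 = u"
  proof -
    have "ws ! 0 = u" using hdws ws(3) n by (cases ws) auto
    moreover have "u \<bullet>c u = 1"
    proof -
      have "u \<bullet>c u = ip n u u" using u by (simp add: scalar_prod_def atLeast0LessThan ip_def)
      also have "\<dots> = complex_of_real ((vnorm u)\<^sup>2)" using vnorm_sq_ip[OF u] by simp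
      finally show ?thesis using nu by simp
    qed
    ultimately have "ws' ! 0 = u" unfolding ws'_def nr_def using n ws(3) by simp
    thus ?thesis unfolding R_def using n ws(3) u unfolding ws'_def by simp
  qed
  thus ?thesis using unitary_from_left[OF R RR] by blast
qed


definition dmat :: "nat \<Rightarrow> (nat \<Rightarrow> real) \<Rightarrow> complex mat" where
  "dmat n d = mat n n (\<lambda>(i,j). if i = j then complex_of_real (d i) else 0)"

lemma dmat_carrier[simp]: "dmat n d \<in> carrier_mat n n" unfolding dmat_def by auto
lemma dmat_dim[simp]: "dim_row (dmat n d) = n" "dim_col (dmat n d) = n" unfolding dmat_def by auto
lemma dmat_index[simp]: "i < n \<Longrightarrow> j < n \<Longrightarrow> dmat n d $$ (i,j) = (if i = j then complex_of_real (d i) else 0)"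
  unfolding dmat_def by auto
lemma cT_dmat[simp]: "cT (dmat n d) = dmat n d" by (rule eq_matI) auto

lemma mult_dmat_right: assumes "A \<in> carrier_mat m n"
  shows "A * dmat n d = mat m n (\<lambda>(i,l). A $$ (i,l) * complex_of_real (d l))"
proof (rule eq_matI)
  fix i j assume "i < dim_row (mat m n (\<lambda>(i,l). A $$ (i,l) * complex_of_real (d l)))"
     "j < dim_col (mat m n (\<lambda>(i,l). A $$ (i,l) * complex_of_real (d l)))"
  hence i: "i < m" and j: "j < n" by auto
  have "(A * dmat n d) $$ (i,j) = (\<Sum>l<n. A $$ (i,l) * (if l = j then complex_of_real (d l) else 0))"
    using assms i j by (simp add: scalar_prod_def atLeast0LessThan)
  also have "\<dots> = (\<Sum>l<n. if l = j then A $$ (i,l) * complex_of_real (d l) else 0)"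
    by (rule sum.cong) auto
  also have "\<dots> = A $$ (i,j) * complex_of_real (d j)" using j by simp
  finally show "(A * dmat n d) $$ (i,j) = mat m n (\<lambda>(i,l). A $$ (i,l) * complex_of_real (d l)) $$ (i,j)"
    using i j by simp
qed (use assms in auto)

lemma udu_index: assumes U: "U \<in> carrier_mat m n" and V: "V \<in> carrier_mat k n" and i: "i < m" and j: "j < k"
  shows "(U * dmat n d * cT V) $$ (i,j) = (\<Sum>l<n. U $$ (i,l) * complex_of_real (d l) * cnj (V $$ (j,l)))"
  using assms by (simp add: mult_dmat_right[OF U] scalar_prod_def atLeast0LessThan)

lemma unitaryD: "unitary_mat n U \<Longrightarrow> U \<in> carrier_mat n n"
  "unitary_mat n U \<Longrightarrow> cT U * U = 1\<^sub>m n" "unitary_mat n U \<Longrightarrow> U * cT U = 1\<^sub>m n"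
  unfolding unitary_mat_def by auto

lemma unitary_mult: assumes "unitary_mat n R" "unitary_mat n V" shows "unitary_mat n (R * V)"
proof -
  have R: "R \<in> carrier_mat n n" and V: "V \<in> carrier_mat n n" using assms unitaryD by auto
  have "cT (R * V) * (R * V) = cT V * cT R * (R * V)" using R V by (simp add: cT_mult[OF R V])
  also have "\<dots> = cT V * (cT R * (R * V))" using R V by (meson assoc_mult_mat cT_carrier mult_carrier_mat)
  also have "cT R * (R * V) = (cT R * R) * V" using assoc_mult_mat[OF cT_carrier[OF R] R V] by simp
  also have "\<dots> = V" using R V assms unitaryD(2)[of n R] by simp
  also have "cT V * V = 1\<^sub>m n" using assms unitaryD by simp
  finally show ?thesis using R V unitary_from_left[of "R*V" n] by auto
qed

lemma vnorm_smult: "vnorm (c \<cdot>\<^sub>v v) = cmod c * vnorm v"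
proof -
  have "(vnorm (c \<cdot>\<^sub>v v))\<^sup>2 = (cmod c * vnorm v)\<^sup>2"
    using vnorm_sq[of v "dim_vec v"] vnorm_sq[of "c \<cdot>\<^sub>v v" "dim_vec v"]
    by (simp add: power_mult_distrib norm_mult sum_distrib_left)
  thus ?thesis by (simp add: power2_eq_iff_nonneg)
qed

theorem spectral: "H \<in> carrier_mat n n \<Longrightarrow> cT H = H \<Longrightarrow> \<exists>U d. unitary_mat n U \<and> H = U * dmat n d * cT U"
proof (induction n arbitrary: H)
  case 0
  have "unitary_mat 0 (1\<^sub>m 0)" unfolding unitary_mat_def by auto
  moreover have "H = 1\<^sub>m 0 * dmat 0 d * cT (1\<^sub>m 0)" for d using 0 by (intro eq_matI) auto
  ultimately show ?case by blast
next
  case (Suc k)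
  define n where "n = Suc k"
  have H: "H \<in> carrier_mat n n" and hH: "cT H = H" using Suc n_def by auto
  obtain e where "eigenvalue H e" using spectrum_non_empty[OF H] unfolding spectrum_def n_def by auto
  then obtain v where v: "v \<in> carrier_vec n" "v \<noteq> 0\<^sub>v n" "H *\<^sub>v v = e \<cdot>\<^sub>v v"
    unfolding eigenvalue_def eigenvector_def using H by auto
  have vpos: "vnorm v > 0"
  proof -
    have "vnorm v \<noteq> 0"
    proof
      assume "vnorm v = 0"
      hence "(\<Sum>i<n. (cmod (v $ i))\<^sup>2) = 0" using vnorm_sq[OF v(1)] by simp
      hence "\<forall>i\<in>{..<n}. (cmod (v $ i))\<^sup>2 = 0" by (subst sum_nonneg_eq_0_iff[symmetric]) auto
      hence "v = 0\<^sub>v n" using v(1) by (intro eq_vecI) auto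
      thus False using v by simp
    qed
    thus ?thesis using vnorm_nonneg[of v] by linarith
  qed
  define u where "u = complex_of_real (1 / vnorm v) \<cdot>\<^sub>v v"
  have u: "u \<in> carrier_vec n" unfolding u_def using v by simp
  have nu: "vnorm u = 1" unfolding u_def vnorm_smult using vpos by (simp add: norm_divide)
  have Hu: "H *\<^sub>v u = e \<cdot>\<^sub>v u" unfolding u_def using v H
    by (simp add: mult_mat_vec smult_smult_assoc mult.commute)
  obtain R where R: "unitary_mat n R" and Ru: "col R 0 = u" using unitary_completion[OF u nu] by blast
  have Rc: "R \<in> carrier_mat n n" using R unitaryD by auto
  define H1 where "H1 = cT R * H * R"
  have H1': "H1 = cT R * (H * R)" unfolding H1_def using assoc_mult_mat[OF cT_carrier[OF Rc] H Rc] .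
  have H1c: "H1 \<in> carrier_mat n n" unfolding H1_def using Rc H by auto
  have hH1: "cT H1 = H1"
  proof -
    have "cT H1 = cT R * cT (cT R * H)" unfolding H1_def
      by (rule cT_mult[of _ n n _ n]) (use Rc H in auto)
    also have "cT (cT R * H) = cT H * R" using cT_mult[OF cT_carrier[OF Rc] H] by simp
    finally show ?thesis unfolding H1_def using hH Rc H assoc_mult_mat[OF cT_carrier[OF Rc] H Rc] by simp
  qed
  have col0: "H1 $$ (i,0) = (if i = 0 then e else 0)" if i: "i < n" for i
  proof -
    have HR: "(H * R) $$ (l,0) = e * u $ l" if l: "l < n" for l
    proof -
      have "(H * R) $$ (l,0) = (H *\<^sub>v col R 0) $ l" using H Rc l unfolding n_def by simp
      thus ?thesis using Hu Ru l u by simp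
    qed
    have HRc: "H * R \<in> carrier_mat n n" using H Rc by simp
    have "H1 $$ (i,0) = (\<Sum>l<n. cT R $$ (i,l) * (H * R) $$ (l,0))"
      unfolding H1' by (rule mult_index[OF cT_carrier[OF Rc] HRc i]) (simp add: n_def)
    also have "\<dots> = (\<Sum>l<n. cnj (R $$ (l,i)) * (H * R) $$ (l,0))"
    proof (rule sum.cong[OF refl])
      fix l assume "l \<in> {..<n}"
      hence "cT R $$ (i,l) = cnj (R $$ (l,i))" using Rc i by simp
      thus "cT R $$ (i,l) * (H * R) $$ (l,0) = cnj (R $$ (l,i)) * (H * R) $$ (l,0)" by (simp only:)
    qed
    also have "\<dots> = e * (\<Sum>l<n. cnj (R $$ (l,i)) * R $$ (l,0))"
    proof -
      have ul: "u $ l = R $$ (l,0)" if "l < n" for l using arg_cong[OF Ru, of "\<lambda>v. v $ l"] Rc that by simp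
      show ?thesis unfolding sum_distrib_left by (rule sum.cong) (auto simp: HR ul)
    qed
    also have "(\<Sum>l<n. cnj (R $$ (l,i)) * R $$ (l,0)) = (cT R * R) $$ (i,0)"
      using Rc i unfolding n_def by (simp add: scalar_prod_def atLeast0LessThan)
    also have "\<dots> = (if i = 0 then 1 else 0)" using unitaryD(2)[OF R] i unfolding n_def by simp
    finally show ?thesis by simp
  qed
  have ce: "cnj e = e"
  proof -
    have "cnj (H1 $$ (0,0)) = H1 $$ (0,0)" using arg_cong[OF hH1, of "\<lambda>A. A $$ (0,0)"] H1c n_def by simp
    thus "cnj e = e" using col0[of 0] n_def by simp
  qed
  have ereal: "e = complex_of_real (Re e)"
  proof -
    have "e \<in> \<real>" using ce by (simp add: Reals_cnj_iff)
    from of_real_Re[OF this] show ?thesis by simp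
  qed
  have row0: "H1 $$ (0,j) = (if j = 0 then e else 0)" if j: "j < n" for j
  proof -
    have "H1 $$ (0,j) = cnj (H1 $$ (j,0))" using arg_cong[OF hH1, of "\<lambda>A. A $$ (0,j)"] H1c n_def j by simp
    thus ?thesis using col0[OF j] ce by auto
  qed
  define H' where "H' = mat k k (\<lambda>(i,j). H1 $$ (Suc i, Suc j))"
  have H'c: "H' \<in> carrier_mat k k" unfolding H'_def by auto
  have hH': "cT H' = H'"
  proof (rule eq_matI)
    fix i j assume "i < dim_row H'" "j < dim_col H'"
    hence i: "i < k" and j: "j < k" unfolding H'_def by auto
    have "cT H1 $$ (Suc i, Suc j) = H1 $$ (Suc i, Suc j)" using hH1 by simp
    thus "cT H' $$ (i,j) = H' $$ (i,j)" using i j H1c n_def unfolding H'_def by simp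
  qed (auto simp: H'_def)
  obtain U' d' where U': "unitary_mat k U'" and H'eq: "H' = U' * dmat k d' * cT U'"
    using Suc.IH[OF H'c hH'] by blast
  have U'c: "U' \<in> carrier_mat k k" using U' unitaryD by auto
  define U1 where "U1 = mat n n (\<lambda>(i,j). if i = 0 \<and> j = 0 then 1 else if i = 0 \<or> j = 0 then 0 else U' $$ (i - 1, j - 1))"
  have U1c: "U1 \<in> carrier_mat n n" unfolding U1_def by auto
  have U1idx: "U1 $$ (i,j) = (if i = 0 \<and> j = 0 then 1 else if i = 0 \<or> j = 0 then 0 else U' $$ (i - 1, j - 1))"
    if "i < n" "j < n" for i j using that unfolding U1_def by simp
  have U1u: "unitary_mat n U1"
  proof -
    have "cT U1 * U1 = 1\<^sub>m n"
    proof (rule eq_matI)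
      fix i j assume "i < dim_row (1\<^sub>m n)" "j < dim_col (1\<^sub>m n)"
      hence i: "i < n" and j: "j < n" by auto
      have "(cT U1 * U1) $$ (i,j) = (\<Sum>l<Suc k. cnj (U1 $$ (l,i)) * U1 $$ (l,j))"
        using U1c i j n_def by (simp add: scalar_prod_def atLeast0LessThan)
      also have "\<dots> = cnj (U1 $$ (0,i)) * U1 $$ (0,j) + (\<Sum>l<k. cnj (U1 $$ (Suc l,i)) * U1 $$ (Suc l,j))"
        by (subst sum.lessThan_Suc_shift) simp
      also have "\<dots> = 1\<^sub>m n $$ (i,j)"
      proof (cases i)
        case 0 thus ?thesis using j i n_def by (cases j) (auto simp: U1idx)
      next
        case (Suc i')
        show ?thesis
        proof (cases j)
          case 0 thus ?thesis using Suc i n_def by (auto simp: U1idx)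
        next
          case (Suc j')
          have "(\<Sum>l<k. cnj (U1 $$ (Suc l,i)) * U1 $$ (Suc l,j)) = (\<Sum>l<k. cnj (U' $$ (l,i')) * U' $$ (l,j'))"
            using \<open>i = Suc i'\<close> Suc i j n_def by (intro sum.cong) (auto simp: U1idx)
          also have "\<dots> = (cT U' * U') $$ (i',j')"
            using U'c \<open>i = Suc i'\<close> Suc i j n_def by (simp add: scalar_prod_def atLeast0LessThan)
          also have "\<dots> = 1\<^sub>m k $$ (i',j')" using unitaryD(2)[OF U'] by simp
          finally show ?thesis using \<open>i = Suc i'\<close> Suc i j n_def by (simp add: U1idx)
        qed
      qed
      finally show "(cT U1 * U1) $$ (i,j) = 1\<^sub>m n $$ (i,j)" .
    qed (use U1c in auto)
    thus ?thesis using unitary_from_left[OF U1c] by auto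
  qed
  define d where "d = (\<lambda>i. if i = 0 then Re e else d' (i - 1))"
  have H1eq: "H1 = U1 * dmat n d * cT U1"
  proof (rule eq_matI)
    fix i j assume "i < dim_row (U1 * dmat n d * cT U1)" "j < dim_col (U1 * dmat n d * cT U1)"
    hence i: "i < n" and j: "j < n" using U1c by auto
    have "(U1 * dmat n d * cT U1) $$ (i,j) = (\<Sum>l<Suc k. U1 $$ (i,l) * complex_of_real (d l) * cnj (U1 $$ (j,l)))"
      using udu_index[OF U1c U1c i j] n_def by simp
    also have "\<dots> = U1 $$ (i,0) * complex_of_real (d 0) * cnj (U1 $$ (j,0))
       + (\<Sum>l<k. U1 $$ (i,Suc l) * complex_of_real (d (Suc l)) * cnj (U1 $$ (j,Suc l)))"
      by (subst sum.lessThan_Suc_shift) simp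
    also have "\<dots> = H1 $$ (i,j)"
    proof (cases i)
      case 0 thus ?thesis using j i n_def row0[OF j] ereal by (cases j) (auto simp: U1idx d_def)
    next
      case (Suc i')
      show ?thesis
      proof (cases j)
        case 0 thus ?thesis using Suc i n_def col0[OF i] by (auto simp: U1idx d_def)
      next
        case (Suc j')
        have "(\<Sum>l<k. U1 $$ (i,Suc l) * complex_of_real (d (Suc l)) * cnj (U1 $$ (j,Suc l)))
            = (\<Sum>l<k. U' $$ (i',l) * complex_of_real (d' l) * cnj (U' $$ (j',l)))"
          using \<open>i = Suc i'\<close> Suc i j n_def by (intro sum.cong) (auto simp: U1idx d_def)
        also have "\<dots> = H' $$ (i',j')"
          using udu_index[OF U'c U'c, of i' j' d'] H'eq \<open>i = Suc i'\<close> Suc i j n_def by simp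
        also have "\<dots> = H1 $$ (i,j)" unfolding H'_def using \<open>i = Suc i'\<close> Suc i j n_def by simp
        finally show ?thesis using \<open>i = Suc i'\<close> Suc i j n_def by (simp add: U1idx)
      qed
    qed
    finally show "H1 $$ (i,j) = (U1 * dmat n d * cT U1) $$ (i,j)" by simp
  qed (use H1c U1c in auto)
  have "H = R * H1 * cT R"
  proof -
    have HR: "H * R \<in> carrier_mat n n" using H Rc by simp
    have "R * H1 = (R * cT R) * (H * R)" unfolding H1' using assoc_mult_mat[OF Rc cT_carrier[OF Rc] HR] by simp
    also have "\<dots> = H * R" using unitaryD(3)[OF R] left_mult_one_mat[OF HR] by simp
    finally have "R * H1 * cT R = H * R * cT R" by simp
    also have "\<dots> = H * (R * cT R)" using assoc_mult_mat[OF H Rc cT_carrier[OF Rc]] .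
    also have "\<dots> = H" using unitaryD(3)[OF R] H by simp
    finally show ?thesis by simp
  qed
  also have "\<dots> = (R * U1) * dmat n d * cT (R * U1)"
    unfolding H1eq using Rc U1c by (simp add: cT_mult[OF Rc U1c] assoc_mult_mat[of _ n n _ n _ n] mult_carrier_mat[of _ n n _ n])
  finally show ?case using unitary_mult[OF R U1u] n_def by blast
qed


lemma psd_qf: "psd_mat n P \<longleftrightarrow> P \<in> carrier_mat n n \<and> cT P = P \<and> (\<forall>v \<in> carrier_vec n. 0 \<le> Re (qf n P v))"
  unfolding psd_mat_def qf_def by simp

lemma ip_minus1: "x \<in> carrier_vec n \<Longrightarrow> z \<in> carrier_vec n \<Longrightarrow> ip n (x - z) y = ip n x y - ip n z y"
  unfolding ip_def by (simp add: left_diff_distrib sum_subtractf)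

lemma ip_zero_iff: "x \<in> carrier_vec n \<Longrightarrow> ip n x x = 0 \<longleftrightarrow> x = 0\<^sub>v n"
proof -
  assume x: "x \<in> carrier_vec n"
  have "ip n x x = 0 \<longleftrightarrow> (\<Sum>i<n. (cmod (x $ i))\<^sup>2) = 0" by (simp only: ip_self of_real_eq_0_iff)
  also have "\<dots> \<longleftrightarrow> (\<forall>i\<in>{..<n}. (cmod (x $ i))\<^sup>2 = 0)" by (rule sum_nonneg_eq_0_iff) auto
  also have "\<dots> \<longleftrightarrow> x = 0\<^sub>v n" using x by (auto simp: vec_eq_iff)
  finally show ?thesis .
qed

lemma psd_zero: assumes P: "psd_mat n P" and v: "v \<in> carrier_vec n" and q0: "Re (qf n P v) = 0"
  shows "P *\<^sub>v v = 0\<^sub>v n"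
proof -
  have Pc: "P \<in> carrier_mat n n" and hP: "cT P = P" and pos: "\<And>w. w \<in> carrier_vec n \<Longrightarrow> 0 \<le> Re (qf n P w)"
    using P unfolding psd_qf by auto
  define y where "y = P *\<^sub>v v"
  have y: "y \<in> carrier_vec n" unfolding y_def using Pc v by simp
  define a where "a = Re (ip n y y)"
  define q where "q = Re (qf n P y)"
  have q: "q \<ge> 0" unfolding q_def using pos[OF y] .
  have a: "a \<ge> 0" unfolding a_def ip_self by (simp add: sum_nonneg)
  have expand: "Re (qf n P (v + complex_of_real t \<cdot>\<^sub>v y)) = 2 * t * a + t\<^sup>2 * q" for t
  proof -
    let ?c = "complex_of_real t"
    have Py: "P *\<^sub>v y \<in> carrier_vec n" using Pc y by simp
    have "qf n P (v + ?c \<cdot>\<^sub>v y) = ip n (P *\<^sub>v (v + ?c \<cdot>\<^sub>v y)) (v + ?c \<cdot>\<^sub>v y)"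
      using qf_ip[OF Pc] v y by simp
    also have "P *\<^sub>v (v + ?c \<cdot>\<^sub>v y) = y + ?c \<cdot>\<^sub>v (P *\<^sub>v y)"
      unfolding y_def using Pc v y by (simp add: mult_add_distrib_mat_vec mult_mat_vec y_def[symmetric])
    also have "ip n (y + ?c \<cdot>\<^sub>v (P *\<^sub>v y)) (v + ?c \<cdot>\<^sub>v y)
      = ip n y v + ?c * ip n y y + ?c * ip n (P *\<^sub>v y) v + ?c * ?c * ip n (P *\<^sub>v y) y"
      using v y Py by (simp add: ip_add1 ip_add2 ip_smult1 ip_smult2 algebra_simps)
    also have "ip n (P *\<^sub>v y) v = ip n y y"
      using ip_adj[OF Pc y v] hP unfolding y_def by simp
    also have "ip n y v = qf n P v" using qf_ip[OF Pc v] ip_adj[OF Pc v v] hP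
      by (simp add: y_def ip_sym[of n "P *\<^sub>v v" v])
    finally have "qf n P (v + ?c \<cdot>\<^sub>v y) = qf n P v + 2 * ?c * ip n y y + ?c * ?c * qf n P y"
      using qf_ip[OF Pc y] by (simp add: algebra_simps)
    hence "Re (qf n P (v + ?c \<cdot>\<^sub>v y)) = Re (qf n P v) + 2 * t * Re (ip n y y) + t * t * Re (qf n P y)"
      by simp
    thus ?thesis using q0 unfolding a_def q_def by (simp add: power2_eq_square)
  qed
  have "a = 0"
  proof (rule ccontr)
    assume "a \<noteq> 0"
    hence ap: "a > 0" using a by simp
    define t where "t = - a / (q + 1)"
    have "0 \<le> 2 * t * a + t\<^sup>2 * q" using pos[of "v + complex_of_real t \<cdot>\<^sub>v y"] v y expand[of t] by simp
    also have "2 * t * a + t\<^sup>2 * q = t * (2 * a + t * q)" by (simp add: algebra_simps power2_eq_square)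
    also have "\<dots> < 0"
    proof (rule mult_neg_pos)
      show "t < 0" unfolding t_def using ap q by simp
      have "q / (q + 1) < 1" using q by simp
      have "2 * a + t * q = a * (2 - q / (q + 1))" unfolding t_def by (simp add: algebra_simps)
      also have "\<dots> > 0" using ap \<open>q / (q + 1) < 1\<close> by simp
      finally show "2 * a + t * q > 0" .
    qed
    finally show False by simp
  qed
  hence "ip n y y = 0"
  proof -
    have "ip n y y = complex_of_real (Re (ip n y y))" by (simp add: ip_self)
    thus ?thesis using \<open>a = 0\<close> unfolding a_def by simp
  qed
  thus ?thesis using ip_zero_iff[OF y] unfolding y_def by simp
qed

lemma eig_col: assumes U: "unitary_mat n U" and D: "D = U * dmat n d * cT U" and j: "j < n"
  shows "D *\<^sub>v col U j = complex_of_real (d j) \<cdot>\<^sub>v col U j"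
proof -
  have Uc: "U \<in> carrier_mat n n" using U unitaryD by auto
  have "D * U = U * dmat n d * (cT U * U)" unfolding D using Uc
    by (simp add: assoc_mult_mat[of _ n n _ n _ n] mult_carrier_mat[of _ n n _ n])
  also have "\<dots> = U * dmat n d" using unitaryD(2)[OF U] Uc by simp
  finally have DU: "D * U = U * dmat n d" .
  have Dc: "D \<in> carrier_mat n n" unfolding D using Uc by (simp add: mult_carrier_mat[of _ n n _ n])
  show ?thesis
  proof (rule eq_vecI)
    fix i assume "i < dim_vec (complex_of_real (d j) \<cdot>\<^sub>v col U j)"
    hence i: "i < n" using Uc by simp
    have "(D *\<^sub>v col U j) $ i = (D * U) $$ (i,j)" using Dc Uc i j by simp
    also have "\<dots> = U $$ (i,j) * complex_of_real (d j)" unfolding DU mult_dmat_right[OF Uc] using i j by simp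
    finally show "(D *\<^sub>v col U j) $ i = (complex_of_real (d j) \<cdot>\<^sub>v col U j) $ i" using i j Uc by simp
  qed (use Dc Uc in auto)
qed

lemma unitary_col_nonzero: assumes U: "unitary_mat n U" and j: "j < n"
  shows "col U j \<noteq> 0\<^sub>v n"
proof
  assume z: "col U j = 0\<^sub>v n"
  have Uc: "U \<in> carrier_mat n n" using U unitaryD by auto
  have "(cT U * U) $$ (j,j) = (\<Sum>l<n. cnj (U $$ (l,j)) * U $$ (l,j))"
    using Uc j by (simp add: scalar_prod_def atLeast0LessThan)
  also have "\<dots> = 0"
  proof (rule sum.neutral, intro ballI)
    fix l assume "l \<in> {..<n}"
    hence "U $$ (l,j) = 0" using arg_cong[OF z, of "\<lambda>v. v $ l"] Uc j by simp
    thus "cnj (U $$ (l,j)) * U $$ (l,j) = 0" by simp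
  qed
  finally show False using unitaryD(2)[OF U] j by simp
qed

lemma psd_unique: assumes P: "psd_mat n P" and Q: "psd_mat n Q" and PQ: "P * P = Q * Q"
  shows "P = Q"
proof -
  have Pc: "P \<in> carrier_mat n n" and hP: "cT P = P" and posP: "\<And>w. w \<in> carrier_vec n \<Longrightarrow> 0 \<le> Re (qf n P w)"
    using P unfolding psd_qf by auto
  have Qc: "Q \<in> carrier_mat n n" and hQ: "cT Q = Q" and posQ: "\<And>w. w \<in> carrier_vec n \<Longrightarrow> 0 \<le> Re (qf n Q w)"
    using Q unfolding psd_qf by auto
  define D where "D = P - Q"
  have Dc: "D \<in> carrier_mat n n" unfolding D_def using Pc Qc by (simp add: minus_carrier_mat)
  have hD: "cT D = D" unfolding D_def using cT_minus[OF Pc Qc] hP hQ by simp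
  obtain U d where U: "unitary_mat n U" and Deq: "D = U * dmat n d * cT U" using spectral[OF Dc hD] by blast
  have Uc: "U \<in> carrier_mat n n" using U unitaryD by auto
  have d0: "d j = 0" if j: "j < n" for j
  proof (rule ccontr)
    assume dj: "d j \<noteq> 0"
    define x where "x = col U j"
    have x: "x \<in> carrier_vec n" unfolding x_def using Uc by (simp add: carrier_vecI)
    have x0: "x \<noteq> 0\<^sub>v n" unfolding x_def using unitary_col_nonzero[OF U j] .
    let ?d = "complex_of_real (d j)"
    have Dx: "D *\<^sub>v x = ?d \<cdot>\<^sub>v x" unfolding x_def using eig_col[OF U Deq j] .
    have Px: "P *\<^sub>v x \<in> carrier_vec n" and Qx: "Q *\<^sub>v x \<in> carrier_vec n" using Pc Qc x by auto
    have sum0: "P *\<^sub>v (D *\<^sub>v x) + D *\<^sub>v (Q *\<^sub>v x) = 0\<^sub>v n"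
    proof -
      have "P *\<^sub>v (D *\<^sub>v x) = P *\<^sub>v (P *\<^sub>v x) - P *\<^sub>v (Q *\<^sub>v x)"
        unfolding D_def using Pc Qc x by (simp add: minus_mult_distrib_mat_vec mult_minus_distrib_mat_vec)
      moreover have "D *\<^sub>v (Q *\<^sub>v x) = P *\<^sub>v (Q *\<^sub>v x) - Q *\<^sub>v (Q *\<^sub>v x)"
        unfolding D_def using Pc Qc x by (simp add: minus_mult_distrib_mat_vec)
      moreover have "P *\<^sub>v (P *\<^sub>v x) = Q *\<^sub>v (Q *\<^sub>v x)"
        using PQ Pc Qc x by (metis assoc_mult_mat_vec)
      ultimately show ?thesis using Pc Qc x by (intro eq_vecI) auto
    qed
    have "ip n (P *\<^sub>v (D *\<^sub>v x)) x + ip n (D *\<^sub>v (Q *\<^sub>v x)) x = 0"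
      using ip_add1[of "P *\<^sub>v (D *\<^sub>v x)" n "D *\<^sub>v (Q *\<^sub>v x)" x] sum0 Pc Qc Dc x
      by (simp add: ip_def)
    moreover have "ip n (P *\<^sub>v (D *\<^sub>v x)) x = ?d * qf n P x"
      unfolding Dx using Pc x by (simp add: mult_mat_vec ip_smult1 qf_ip)
    moreover have "ip n (D *\<^sub>v (Q *\<^sub>v x)) x = ?d * qf n Q x"
    proof -
      have "ip n (D *\<^sub>v (Q *\<^sub>v x)) x = ip n (Q *\<^sub>v x) (cT D *\<^sub>v x)" using ip_adj[OF Dc Qx x] .
      also have "\<dots> = ?d * qf n Q x" unfolding hD Dx using Qc x by (simp add: ip_smult2 qf_ip)
      finally show ?thesis .
    qed
    ultimately have "?d * (qf n P x + qf n Q x) = 0" by (simp add: algebra_simps)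
    hence "qf n P x + qf n Q x = 0" using dj by simp
    hence "Re (qf n P x) + Re (qf n Q x) = 0" by (metis plus_complex.sel(1) zero_complex.sel(1))
    hence "Re (qf n P x) = 0" "Re (qf n Q x) = 0" using posP[OF x] posQ[OF x] by auto
    hence "P *\<^sub>v x = 0\<^sub>v n" "Q *\<^sub>v x = 0\<^sub>v n" using psd_zero[OF P x] psd_zero[OF Q x] by auto
    hence "D *\<^sub>v x = 0\<^sub>v n" unfolding D_def using Pc Qc x by (simp add: minus_mult_distrib_mat_vec)
    hence "?d \<cdot>\<^sub>v x = 0\<^sub>v n" using Dx by simp
    hence "x = 0\<^sub>v n"
    proof (intro eq_vecI)
      fix i assume "?d \<cdot>\<^sub>v x = 0\<^sub>v n" "i < dim_vec (0\<^sub>v n :: complex vec)"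
      hence "?d * x $ i = 0" using x by (metis carrier_vecD index_smult_vec(1) index_zero_vec(1) index_zero_vec(2))
      thus "x $ i = 0\<^sub>v n $ i" using dj \<open>i < dim_vec (0\<^sub>v n :: complex vec)\<close> by simp
    qed (use x in auto)
    thus False using x0 by simp
  qed
  have "dmat n d = 0\<^sub>m n n" by (rule eq_matI) (auto simp: d0)
  hence "D = 0\<^sub>m n n" unfolding Deq using Uc by simp
  thus ?thesis unfolding D_def using Pc Qc by (auto simp: mat_eq_iff)
qed


definition cof :: "nat \<Rightarrow> nat \<Rightarrow> complex mat \<Rightarrow> (nat \<Rightarrow> real) \<Rightarrow> bool" where
  "cof m n B s \<longleftrightarrow> B \<in> carrier_mat m n \<and> cT B * B = dmat n (\<lambda>i. (s i)\<^sup>2) \<and> (\<forall>i<n. 0 \<le> s i)"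

lemma mult_cnj_sq: "z * cnj z = (complex_of_real (cmod z))\<^sup>2" "cnj z * z = (complex_of_real (cmod z))\<^sup>2"
  by (metis complex_norm_square of_real_power, metis complex_norm_square of_real_power mult.commute)

lemma dmat_mult: "dmat n a * dmat n b = dmat n (\<lambda>i. a i * b i)"
  unfolding mult_dmat_right[OF dmat_carrier] by (rule eq_matI) auto

lemma dmat_vec: "w \<in> carrier_vec n \<Longrightarrow> i < n \<Longrightarrow> (dmat n a *\<^sub>v w) $ i = complex_of_real (a i) * w $ i"
proof -
  assume w: "w \<in> carrier_vec n" and i: "i < n"
  have "(dmat n a *\<^sub>v w) $ i = (\<Sum>l<n. (if i = l then complex_of_real (a i) else 0) * w $ l)"
    unfolding mult_vec_index[OF dmat_carrier w i] using i by (intro sum.cong) auto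
  also have "\<dots> = (\<Sum>l<n. if l = i then complex_of_real (a i) * w $ l else 0)" by (rule sum.cong) auto
  finally show ?thesis using i by simp
qed

lemma qf_dmat: "w \<in> carrier_vec n \<Longrightarrow> qf n (dmat n a) w = complex_of_real (\<Sum>i<n. a i * (cmod (w $ i))\<^sup>2)"
proof -
  assume w: "w \<in> carrier_vec n"
  have "qf n (dmat n a) w = ip n (dmat n a *\<^sub>v w) w" using qf_ip[OF dmat_carrier w] .
  also have "\<dots> = (\<Sum>i<n. complex_of_real (a i) * (w $ i * cnj (w $ i)))"
    unfolding ip_def using w by (intro sum.cong) (simp_all add: dmat_vec del: index_mult_mat_vec)
  also have "\<dots> = complex_of_real (\<Sum>i<n. a i * (cmod (w $ i))\<^sup>2)"
    unfolding of_real_sum by (intro sum.cong) (auto simp: complex_norm_square[symmetric])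
  finally show ?thesis .
qed

lemma mat_assoc3: "A \<in> carrier_mat m n \<Longrightarrow> B \<in> carrier_mat n k \<Longrightarrow> C \<in> carrier_mat k l \<Longrightarrow> A * B * C = A * (B * C)"
  by simp

lemma unit_vnorm: assumes U: "unitary_mat n U" and v: "v \<in> carrier_vec n"
  shows "vnorm (cT U *\<^sub>v v) = vnorm v"
proof -
  have Uc: "U \<in> carrier_mat n n" using U unitaryD by auto
  have "complex_of_real ((vnorm (cT U *\<^sub>v v))\<^sup>2) = qf n (cT (cT U) * cT U) v"
    using vnorm_mult_sq[OF cT_carrier[OF Uc] v] .
  also have "cT (cT U) * cT U = 1\<^sub>m n" using unitaryD(3)[OF U] by simp
  also have "qf n (1\<^sub>m n) v = ip n v v" using qf_ip[of "1\<^sub>m n" n v] v by simp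
  also have "\<dots> = complex_of_real ((vnorm v)\<^sup>2)" using vnorm_sq_ip[OF v] by simp
  finally have "(vnorm (cT U *\<^sub>v v))\<^sup>2 = (vnorm v)\<^sup>2" using of_real_eq_iff by blast
  thus ?thesis by (simp add: power2_eq_iff_nonneg)
qed

lemma unit_col: assumes U: "unitary_mat n U" and j: "j < n"
  shows "cT U *\<^sub>v col U j = unit_vec n j" "vnorm (col U j) = 1" "col U j \<in> carrier_vec n"
proof -
  have Uc: "U \<in> carrier_mat n n" using U unitaryD by auto
  show cu: "col U j \<in> carrier_vec n" using Uc by (simp add: carrier_vecI)
  show e: "cT U *\<^sub>v col U j = unit_vec n j"
  proof (rule eq_vecI)
    fix i assume "i < dim_vec (unit_vec n j)"
    hence i: "i < n" by simp
    have "(cT U *\<^sub>v col U j) $ i = (cT U * U) $$ (i,j)" using Uc i j by simp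
    thus "(cT U *\<^sub>v col U j) $ i = unit_vec n j $ i" using unitaryD(2)[OF U] i j by (simp add: unit_vec_def)
  qed (use Uc in auto)
  have "vnorm (unit_vec n j) = 1"
  proof -
    have "(vnorm (unit_vec n j))\<^sup>2 = (\<Sum>i<n. (cmod (unit_vec n j $ i))\<^sup>2)" by (rule vnorm_sq) simp
    also have "\<dots> = (\<Sum>i<n. if i = j then 1 else 0)" by (rule sum.cong) (auto simp: unit_vec_def)
    also have "\<dots> = 1" using j by simp
    finally have "(vnorm (unit_vec n j))\<^sup>2 = 1\<^sup>2" by simp
    thus ?thesis using power2_eq_iff_nonneg[of "vnorm (unit_vec n j)" 1] by simp
  qed
  thus "vnorm (col U j) = 1" using unit_vnorm[OF U cu] e by simp
qed

lemma cof_norm_sq: assumes B: "cof m n B s" and w: "w \<in> carrier_vec n"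
  shows "(vnorm (B *\<^sub>v w))\<^sup>2 = (\<Sum>i<n. (s i)\<^sup>2 * (cmod (w $ i))\<^sup>2)"
proof -
  have Bc: "B \<in> carrier_mat m n" and BB: "cT B * B = dmat n (\<lambda>i. (s i)\<^sup>2)" using B unfolding cof_def by auto
  have "complex_of_real ((vnorm (B *\<^sub>v w))\<^sup>2) = qf n (cT B * B) w" using vnorm_mult_sq[OF Bc w] .
  also have "\<dots> = complex_of_real (\<Sum>i<n. (s i)\<^sup>2 * (cmod (w $ i))\<^sup>2)" unfolding BB using qf_dmat[OF w] .
  finally show ?thesis using of_real_eq_iff by blast
qed

lemma svd_exists: assumes A: "A \<in> carrier_mat m n"
  shows "\<exists>B s U. cof m n B s \<and> unitary_mat n U \<and> A = B * cT U"
proof -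
  define H where "H = cT A * A"
  have Hc: "H \<in> carrier_mat n n" unfolding H_def using mult_carrier_mat[OF cT_carrier[OF A] A] .
  have hH: "cT H = H" unfolding H_def using cT_mult[OF cT_carrier[OF A] A] by simp
  obtain U d where U: "unitary_mat n U" and Heq: "H = U * dmat n d * cT U" using spectral[OF Hc hH] by blast
  have Uc: "U \<in> carrier_mat n n" using U unitaryD by auto
  define B where "B = A * U"
  have Bc: "B \<in> carrier_mat m n" unfolding B_def using A Uc by simp
  have BB: "cT B * B = dmat n d"
  proof -
    have "cT B * B = cT U * cT A * (A * U)" unfolding B_def using cT_mult[OF A Uc] by simp
    also have "\<dots> = cT U * (cT A * (A * U))" using A Uc by (meson assoc_mult_mat cT_carrier mult_carrier_mat)
    also have "cT A * (A * U) = cT A * A * U" using assoc_mult_mat[OF cT_carrier[OF A] A Uc] by simp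
    also have "cT U * (cT A * A * U) = cT U * (cT A * A) * U"
      using assoc_mult_mat[OF cT_carrier[OF Uc] mult_carrier_mat[OF cT_carrier[OF A] A] Uc] by simp
    also have "\<dots> = (cT U * U) * dmat n d * (cT U * U)" unfolding H_def[symmetric] Heq using Uc
      by (simp add: assoc_mult_mat[of _ n n _ n _ n] mult_carrier_mat[of _ n n _ n])
    also have "\<dots> = dmat n d" using unitaryD(2)[OF U] by simp
    finally show ?thesis .
  qed
  have dpos: "d i \<ge> 0" if i: "i < n" for i
  proof -
    have "complex_of_real (d i) = (cT B * B) $$ (i,i)" unfolding BB using i by simp
    also have "\<dots> = (\<Sum>l<m. cnj (B $$ (l,i)) * B $$ (l,i))" using Bc i by (simp add: scalar_prod_def atLeast0LessThan)
    also have "\<dots> = complex_of_real (\<Sum>l<m. (cmod (B $$ (l,i)))\<^sup>2)"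
      unfolding of_real_sum by (intro sum.cong) (auto simp: mult_cnj_sq)
    finally have "d i = (\<Sum>l<m. (cmod (B $$ (l,i)))\<^sup>2)" using of_real_eq_iff by blast
    thus ?thesis by (simp add: sum_nonneg)
  qed
  define s where "s = (\<lambda>i. sqrt (d i))"
  have "dmat n (\<lambda>i. (s i)\<^sup>2) = dmat n d" unfolding s_def using dpos by (auto simp: mat_eq_iff)
  hence cofB: "cof m n B s" unfolding cof_def s_def using Bc BB dpos by auto
  have "B * cT U = A * (U * cT U)" unfolding B_def using assoc_mult_mat[OF A Uc cT_carrier[OF Uc]] .
  also have "\<dots> = A" using unitaryD(3)[OF U] A by simp
  finally show ?thesis using cofB U by metis
qed


lemma cT_BU: assumes "B \<in> carrier_mat m n" "U \<in> carrier_mat n n" shows "cT (B * cT U) = U * cT B"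
  using cT_mult[OF assms(1) cT_carrier[OF assms(2)]] by simp

lemma nuclear_cof: assumes B: "cof m n B s" and U: "unitary_mat n U"
  shows "nuclear_norm (B * cT U) = (\<Sum>i<n. s i)"
proof -
  have Bc: "B \<in> carrier_mat m n" and BB: "cT B * B = dmat n (\<lambda>i. (s i)\<^sup>2)" and sp: "\<And>i. i < n \<Longrightarrow> 0 \<le> s i"
    using B unfolding cof_def by auto
  have Uc: "U \<in> carrier_mat n n" using U unitaryD by auto
  define A where "A = B * cT U"
  have Ac: "A \<in> carrier_mat m n" unfolding A_def using Bc Uc by simp
  define D where "D = dmat n s"
  define S where "S = U * D * cT U"
  have Sc: "S \<in> carrier_mat n n" unfolding S_def D_def using Uc by (simp add: mult_carrier_mat[of _ n n _ n])
  have AA: "cT A * A = U * dmat n (\<lambda>i. (s i)\<^sup>2) * cT U"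
  proof -
    have "cT A * A = U * cT B * (B * cT U)" unfolding A_def using cT_BU[OF Bc Uc] by simp
    also have "\<dots> = U * (cT B * (B * cT U))" using assoc_mult_mat[OF Uc cT_carrier[OF Bc] mult_carrier_mat[OF Bc cT_carrier[OF Uc]]] .
    also have "cT B * (B * cT U) = cT B * B * cT U" using assoc_mult_mat[OF cT_carrier[OF Bc] Bc cT_carrier[OF Uc]] by simp
    finally show ?thesis unfolding BB using Uc by (simp add: assoc_mult_mat[of _ n n _ n _ n] mult_carrier_mat[of _ n n _ n])
  qed
  have SS: "S * S = cT A * A"
  proof -
    have "S * S = U * D * (cT U * U) * D * cT U" unfolding S_def D_def using Uc
      by (simp add: assoc_mult_mat[of _ n n _ n _ n] mult_carrier_mat[of _ n n _ n])
    also have "\<dots> = U * (D * D) * cT U" unfolding unitaryD(2)[OF U] D_def using Uc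
      by (simp add: assoc_mult_mat[of _ n n _ n _ n] mult_carrier_mat[of _ n n _ n])
    also have "D * D = dmat n (\<lambda>i. (s i)\<^sup>2)" unfolding D_def dmat_mult by (simp add: power2_eq_square)
    finally show ?thesis using AA by simp
  qed
  have hS: "cT S = S"
  proof -
    have "cT S = cT (cT U) * cT (U * D)" unfolding S_def
      by (rule cT_mult[of _ n n _ n]) (use Uc D_def in auto)
    also have "cT (U * D) = cT D * cT U" using cT_mult[OF Uc dmat_carrier] unfolding D_def .
    finally show ?thesis unfolding S_def D_def using Uc by (simp add: assoc_mult_mat[of _ n n _ n _ n] mult_carrier_mat[of _ n n _ n])
  qed
  have psdS: "psd_mat n S" unfolding psd_qf
  proof (intro conjI ballI)
    fix v :: "complex vec" assume v: "v \<in> carrier_vec n"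
    define w where "w = cT U *\<^sub>v v"
    have w: "w \<in> carrier_vec n" unfolding w_def using mult_mat_vec_carrier[OF cT_carrier[OF Uc] v] .
    have "qf n S v = ip n (S *\<^sub>v v) v" using qf_ip[OF Sc v] .
    also have "S *\<^sub>v v = U *\<^sub>v (D *\<^sub>v w)"
    proof -
      have Dc: "D \<in> carrier_mat n n" unfolding D_def by simp
      have "S *\<^sub>v v = (U * D) *\<^sub>v w" unfolding S_def w_def
        using assoc_mult_mat_vec[OF mult_carrier_mat[OF Uc Dc] cT_carrier[OF Uc] v] .
      also have "\<dots> = U *\<^sub>v (D *\<^sub>v w)" using assoc_mult_mat_vec[OF Uc Dc w] .
      finally show ?thesis .
    qed
    also have "ip n (U *\<^sub>v (D *\<^sub>v w)) v = ip n (D *\<^sub>v w) w"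
    proof -
      have Dw: "D *\<^sub>v w \<in> carrier_vec n" unfolding D_def using mult_mat_vec_carrier[OF dmat_carrier w] .
      show ?thesis using ip_adj[OF Uc Dw v] unfolding w_def[symmetric] .
    qed
    also have "\<dots> = qf n D w" using qf_ip[OF _ w, of D] D_def by simp
    also have "\<dots> = complex_of_real (\<Sum>i<n. s i * (cmod (w $ i))\<^sup>2)" unfolding D_def using qf_dmat[OF w] .
    finally have "Re (qf n S v) = (\<Sum>i<n. s i * (cmod (w $ i))\<^sup>2)" by (simp only: Re_complex_of_real)
    also have "\<dots> \<ge> 0" using sp by (intro sum_nonneg) auto
    finally show "0 \<le> Re (qf n S v)" .
  qed (use Sc hS in auto)
  have "msqrt (cT A * A) = S"
    unfolding msqrt_def
  proof (rule the_equality)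
    show "psd_mat (dim_row (cT A * A)) S \<and> S * S = cT A * A" using psdS SS Ac by simp
    fix P assume "psd_mat (dim_row (cT A * A)) P \<and> P * P = cT A * A"
    hence "psd_mat n P" "P * P = S * S" using SS Ac by auto
    thus "P = S" using psd_unique[OF _ psdS] by blast
  qed
  hence "nuclear_norm A = Re (mtrace S)" unfolding nuclear_norm_def by simp
  also have "mtrace S = mtrace (D * cT U * U)"
    unfolding S_def using mtrace_comm[OF Uc, of "D * cT U"] Uc D_def
    by (simp add: assoc_mult_mat[of _ n n _ n _ n] mult_carrier_mat[of _ n n _ n])
  also have "D * cT U * U = D" unfolding D_def using Uc unitaryD(2)[OF U]
    by (simp add: assoc_mult_mat[of _ n n _ n _ n] mult_carrier_mat[of _ n n _ n])
  also have "mtrace D = (\<Sum>i<n. complex_of_real (s i))" unfolding D_def mtrace_def by simp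
  finally show ?thesis unfolding A_def by simp
qed


lemma vnorm_pos_dim: "v \<in> carrier_vec n \<Longrightarrow> vnorm v = 1 \<Longrightarrow> 0 < n"
  unfolding vnorm_def by (cases n) auto

lemma cof_BU_vec: assumes B: "cof m n B s" and U: "unitary_mat n U" and v: "v \<in> carrier_vec n"
  shows "(B * cT U) *\<^sub>v v = B *\<^sub>v (cT U *\<^sub>v v)"
  using assoc_mult_mat_vec[of B m n "cT U" n v] B U v unfolding cof_def by (auto dest: unitaryD)

lemma spec_cof_bound: assumes B: "cof m n B s" and U: "unitary_mat n U" and v: "v \<in> carrier_vec n"
  and nv: "vnorm v = 1" and M: "\<And>i. i < n \<Longrightarrow> s i \<le> M"
  shows "vnorm ((B * cT U) *\<^sub>v v) \<le> M"
proof -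
  have Uc: "U \<in> carrier_mat n n" using U unitaryD by auto
  have sp: "\<And>i. i < n \<Longrightarrow> 0 \<le> s i" using B unfolding cof_def by auto
  have n: "0 < n" using vnorm_pos_dim[OF v nv] .
  have M0: "0 \<le> M" using sp[OF n] M[OF n] by simp
  define w where "w = cT U *\<^sub>v v"
  have w: "w \<in> carrier_vec n" unfolding w_def using mult_mat_vec_carrier[OF cT_carrier[OF Uc] v] .
  have nw: "vnorm w = 1" unfolding w_def using unit_vnorm[OF U v] nv by simp
  have "(vnorm ((B * cT U) *\<^sub>v v))\<^sup>2 = (\<Sum>i<n. (s i)\<^sup>2 * (cmod (w $ i))\<^sup>2)"
    unfolding cof_BU_vec[OF B U v] w_def[symmetric] using cof_norm_sq[OF B w] .
  also have "\<dots> \<le> (\<Sum>i<n. M\<^sup>2 * (cmod (w $ i))\<^sup>2)"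
    by (intro sum_mono mult_right_mono power_mono) (auto simp: sp M)
  also have "\<dots> = M\<^sup>2 * (vnorm w)\<^sup>2" by (simp add: vnorm_sq[OF w] sum_distrib_left)
  finally have "(vnorm ((B * cT U) *\<^sub>v v))\<^sup>2 \<le> M\<^sup>2" using nw by simp
  thus ?thesis using M0 by (rule power2_le_imp_le)
qed

lemma spec_set_bdd: assumes A: "A \<in> carrier_mat m n"
  shows "bdd_above {vnorm (A *\<^sub>v v) | v. v \<in> carrier_vec (dim_col A) \<and> vnorm v = 1}"
proof -
  obtain B s U where B: "cof m n B s" and U: "unitary_mat n U" and AB: "A = B * cT U" using svd_exists[OF A] by blast
  define M where "M = (\<Sum>i<n. s i)"
  have sp: "\<And>i. i < n \<Longrightarrow> 0 \<le> s i" using B unfolding cof_def by auto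
  have "s i \<le> M" if "i < n" for i unfolding M_def
    using member_le_sum[of i "{..<n}" s] sp that by auto
  hence "\<forall>x \<in> {vnorm (A *\<^sub>v v) | v. v \<in> carrier_vec (dim_col A) \<and> vnorm v = 1}. x \<le> M"
    using spec_cof_bound[OF B U] A AB by auto
  thus ?thesis by (auto simp: bdd_above_def)
qed

lemma spec_le: assumes A: "A \<in> carrier_mat m n" and v: "v \<in> carrier_vec n" and nv: "vnorm v = 1"
  shows "vnorm (A *\<^sub>v v) \<le> spectral_norm A"
  unfolding spectral_norm_def by (rule cSup_upper) (use spec_set_bdd[OF A] A v nv in auto)

lemma spec_nonneg: assumes A: "A \<in> carrier_mat m n" and n: "0 < n" shows "0 \<le> spectral_norm A"
proof -
  have "vnorm (unit_vec n 0) = 1" using unit_col(2)[of n "1\<^sub>m n" 0] n unfolding unitary_mat_def by simp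
  thus ?thesis using spec_le[OF A, of "unit_vec n 0"] n by (meson order.trans vnorm_nonneg unit_vec_carrier)
qed

lemma spec_least: assumes A: "A \<in> carrier_mat m n" and n: "0 < n"
  and K: "\<And>v. v \<in> carrier_vec n \<Longrightarrow> vnorm v = 1 \<Longrightarrow> vnorm (A *\<^sub>v v) \<le> K"
  shows "spectral_norm A \<le> K"
proof -
  have "vnorm (unit_vec n 0) = 1" using unit_col(2)[of n "1\<^sub>m n" 0] n unfolding unitary_mat_def by simp
  hence "vnorm (A *\<^sub>v unit_vec n 0) \<in> {vnorm (A *\<^sub>v v) | v. v \<in> carrier_vec (dim_col A) \<and> vnorm v = 1}"
    using A unit_vec_carrier by blast
  hence ne: "{vnorm (A *\<^sub>v v) | v. v \<in> carrier_vec (dim_col A) \<and> vnorm v = 1} \<noteq> {}" by blast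
  show ?thesis unfolding spectral_norm_def by (rule cSup_least[OF ne]) (use K A in auto)
qed

lemma spectral_cof: assumes B: "cof m n B s" and U: "unitary_mat n U" and n: "0 < n"
  shows "spectral_norm (B * cT U) = Max (s ` {..<n})"
proof -
  have Bc: "B \<in> carrier_mat m n" using B unfolding cof_def by auto
  have Uc: "U \<in> carrier_mat n n" using U unitaryD by auto
  have Ac: "B * cT U \<in> carrier_mat m n" using Bc Uc by simp
  define M where "M = Max (s ` {..<n})"
  have M: "\<And>i. i < n \<Longrightarrow> s i \<le> M" unfolding M_def by simp
  have "M \<in> s ` {..<n}" unfolding M_def by (rule Max_in) (use n in auto)
  then obtain j where j: "j < n" "s j = M" by auto
  have sp: "\<And>i. i < n \<Longrightarrow> 0 \<le> s i" using B unfolding cof_def by auto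
  have le: "spectral_norm (B * cT U) \<le> M"
    by (rule spec_least[OF Ac n]) (rule spec_cof_bound[OF B U _ _ M])
  have "vnorm ((B * cT U) *\<^sub>v col U j) = M"
  proof -
    have "(vnorm ((B * cT U) *\<^sub>v col U j))\<^sup>2 = (\<Sum>i<n. (s i)\<^sup>2 * (cmod (unit_vec n j $ i))\<^sup>2)"
      unfolding cof_BU_vec[OF B U unit_col(3)[OF U j(1)]] unit_col(1)[OF U j(1)]
      using cof_norm_sq[OF B unit_vec_carrier] .
    also have "\<dots> = (\<Sum>i<n. if i = j then (s j)\<^sup>2 else 0)" by (rule sum.cong) (auto simp: unit_vec_def)
    also have "\<dots> = M\<^sup>2" using j by simp
    finally show ?thesis using sp[OF j(1)] j by (simp add: power2_eq_iff_nonneg)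
  qed
  hence "M \<le> spectral_norm (B * cT U)" using spec_le[OF Ac unit_col(3)[OF U j(1)] unit_col(2)[OF U j(1)]] by simp
  thus ?thesis using le M_def by simp
qed


lemma cs_re: assumes x: "x \<in> carrier_vec n" and y: "y \<in> carrier_vec n"
  shows "Re (ip n x y) \<le> vnorm x * vnorm y"
proof -
  define a where "a = vnorm x"
  define b where "b = vnorm y"
  have a: "a \<ge> 0" and b: "b \<ge> 0" unfolding a_def b_def by auto
  define z where "z = complex_of_real b \<cdot>\<^sub>v x + complex_of_real (- a) \<cdot>\<^sub>v y"
  have z: "z \<in> carrier_vec n" unfolding z_def using x y by simp
  have xx: "ip n x x = complex_of_real (a\<^sup>2)" unfolding a_def using vnorm_sq_ip[OF x] by simp
  have yy: "ip n y y = complex_of_real (b\<^sup>2)" unfolding b_def using vnorm_sq_ip[OF y] by simp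
  have "ip n z z = complex_of_real b * complex_of_real b * ip n x x + complex_of_real b * complex_of_real (-a) * ip n x y
     + complex_of_real (-a) * complex_of_real b * ip n y x + complex_of_real (-a) * complex_of_real (-a) * ip n y y"
    unfolding z_def using x y by (simp add: ip_add1 ip_add2 ip_smult1 ip_smult2 algebra_simps)
  hence "Re (ip n z z) = b * b * a\<^sup>2 - b * a * Re (ip n x y) - a * b * Re (ip n y x) + a * a * b\<^sup>2"
    unfolding xx yy by simp
  also have "Re (ip n y x) = Re (ip n x y)" using ip_sym[of n y x] by simp
  finally have eq: "Re (ip n z z) = 2 * (a * b) * (a * b - Re (ip n x y))" by (simp add: algebra_simps power2_eq_square)
  have "Re (ip n z z) \<ge> 0" unfolding ip_self by (simp add: sum_nonneg)
  hence ge: "(a * b) * (a * b - Re (ip n x y)) \<ge> 0" unfolding eq by simp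
  show ?thesis
  proof (cases "a * b = 0")
    case True
    hence "x = 0\<^sub>v n \<or> y = 0\<^sub>v n"
    proof -
      from True have "a = 0 \<or> b = 0" by simp
      hence "a\<^sup>2 = 0 \<or> b\<^sup>2 = 0" by auto
      thus ?thesis using xx yy ip_zero_iff[OF x] ip_zero_iff[OF y] by auto
    qed
    hence "ip n x y = 0" unfolding ip_def using x y by auto
    thus ?thesis unfolding a_def[symmetric] b_def[symmetric] using a b by simp
  next
    case False
    hence "a * b > 0" using a b by simp
    thus ?thesis using ge unfolding a_def[symmetric] b_def[symmetric] by (simp add: zero_le_mult_iff)
  qed
qed

lemma cof_col_norm: assumes B: "cof m n B s" and l: "l < n" shows "vnorm (col B l) = s l"
proof -
  have Bc: "B \<in> carrier_mat m n" and sp: "0 \<le> s l" using B l unfolding cof_def by auto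
  have "col B l = B *\<^sub>v unit_vec n l"
    by (rule eq_vecI) (use Bc l in \<open>auto simp: scalar_prod_def unit_vec_def atLeast0LessThan
       if_distrib[of "\<lambda>x. _ * x"] cong: if_cong\<close>)
  hence "(vnorm (col B l))\<^sup>2 = (\<Sum>i<n. (s i)\<^sup>2 * (cmod (unit_vec n l $ i))\<^sup>2)"
    using cof_norm_sq[OF B unit_vec_carrier] by simp
  also have "\<dots> = (\<Sum>i<n. if i = l then (s l)\<^sup>2 else 0)" by (rule sum.cong) (auto simp: unit_vec_def)
  also have "\<dots> = (s l)\<^sup>2" using l by simp
  finally show ?thesis using sp by (simp add: power2_eq_iff_nonneg)
qed

lemma trace_duality: assumes A: "A \<in> carrier_mat m n" and Z: "Z \<in> carrier_mat m n" and n: "0 < n"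
  shows "innerV A Z \<le> nuclear_norm A * spectral_norm Z"
proof -
  obtain B s U where B: "cof m n B s" and U: "unitary_mat n U" and AB: "A = B * cT U" using svd_exists[OF A] by blast
  have Bc: "B \<in> carrier_mat m n" and sp: "\<And>i. i < n \<Longrightarrow> 0 \<le> s i" using B unfolding cof_def by auto
  have Uc: "U \<in> carrier_mat n n" using U unitaryD by auto
  define Y where "Y = Z * U"
  have Yc: "Y \<in> carrier_mat m n" unfolding Y_def using Z Uc by simp
  have "A * cT Z = B * cT Y"
  proof -
    have "A * cT Z = B * (cT U * cT Z)" unfolding AB using assoc_mult_mat[OF Bc cT_carrier[OF Uc] cT_carrier[OF Z]] .
    also have "cT U * cT Z = cT Y" unfolding Y_def using cT_mult[OF Z Uc] by simp
    finally show ?thesis .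
  qed
  hence "innerV A Z = Re (\<Sum>i<m. \<Sum>l<n. B $$ (i,l) * cnj (Y $$ (i,l)))"
    unfolding innerV_def mtrace_def using Bc Yc by (simp add: scalar_prod_def atLeast0LessThan)
  also have "(\<Sum>i<m. \<Sum>l<n. B $$ (i,l) * cnj (Y $$ (i,l))) = (\<Sum>l<n. ip m (col B l) (col Y l))"
    unfolding ip_def using Bc Yc by (subst sum.swap) (intro sum.cong, auto)
  also have "Re \<dots> = (\<Sum>l<n. Re (ip m (col B l) (col Y l)))" by (simp add: Re_sum)
  also have "\<dots> \<le> (\<Sum>l<n. s l * spectral_norm Z)"
  proof (rule sum_mono)
    fix l assume "l \<in> {..<n}"
    hence l: "l < n" by simp
    have cB: "col B l \<in> carrier_vec m" and cY: "col Y l \<in> carrier_vec m" using Bc Yc l by (auto simp: carrier_vecI)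
    have "Re (ip m (col B l) (col Y l)) \<le> vnorm (col B l) * vnorm (col Y l)" using cs_re[OF cB cY] .
    also have "vnorm (col B l) = s l" using cof_col_norm[OF B l] .
    also have cYl: "col Y l = Z *\<^sub>v col U l" unfolding Y_def using col_mult2[OF Z Uc l] .
    also have "s l * vnorm (Z *\<^sub>v col U l) \<le> s l * spectral_norm Z"
      using spec_le[OF Z unit_col(3)[OF U l] unit_col(2)[OF U l]] sp[OF l] by (rule mult_left_mono)
    finally show "Re (ip m (col B l) (col Y l)) \<le> s l * spectral_norm Z" using cYl by simp
  qed
  also have "\<dots> = nuclear_norm A * spectral_norm Z" unfolding AB nuclear_cof[OF B U] by (simp add: sum_distrib_right)
  finally show ?thesis .
qed


lemma innerV_sym: "A \<in> carrier_mat m n \<Longrightarrow> B \<in> carrier_mat m n \<Longrightarrow> innerV A B = innerV B A"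
  by (simp add: innerV_sum[of _ m n] mult.commute)

lemma innerV_add1: "A \<in> carrier_mat m n \<Longrightarrow> B \<in> carrier_mat m n \<Longrightarrow> C \<in> carrier_mat m n \<Longrightarrow>
  innerV (A + B) C = innerV A C + innerV B C"
  by (simp add: innerV_sum[of _ m n] sum.distrib algebra_simps)

lemma innerV_minus1: "A \<in> carrier_mat m n \<Longrightarrow> B \<in> carrier_mat m n \<Longrightarrow> C \<in> carrier_mat m n \<Longrightarrow>
  innerV (A - B) C = innerV A C - innerV B C"
  using minus_carrier_mat[of B m n A] by (simp add: innerV_sum[of _ m n] sum_subtractf algebra_simps)

lemma innerV_add2: "A \<in> carrier_mat m n \<Longrightarrow> B \<in> carrier_mat m n \<Longrightarrow> C \<in> carrier_mat m n \<Longrightarrow>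
  innerV C (A + B) = innerV C A + innerV C B"
  by (simp add: innerV_sum[of _ m n] sum.distrib algebra_simps)

lemma innerV_minus2: "A \<in> carrier_mat m n \<Longrightarrow> B \<in> carrier_mat m n \<Longrightarrow> C \<in> carrier_mat m n \<Longrightarrow>
  innerV C (A - B) = innerV C A - innerV C B"
  using minus_carrier_mat[of B m n A] by (simp add: innerV_sum[of _ m n] sum_subtractf algebra_simps)

lemma innerV_self: "A \<in> carrier_mat m n \<Longrightarrow> innerV A A = (\<Sum>i<m. \<Sum>j<n. (cmod (A $$ (i,j)))\<^sup>2)"
  unfolding innerV_sum[of A m n A] by (intro sum.cong refl) (simp only: mult_cnj_sq Re_complex_of_real of_real_power[symmetric])

lemma innerV_self_nonneg: "A \<in> carrier_mat m n \<Longrightarrow> innerV A A \<ge> 0"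
  by (simp add: innerV_self sum_nonneg)

lemma innerV_self_zero: assumes A: "A \<in> carrier_mat m n" and z: "innerV A A = 0" shows "A = 0\<^sub>m m n"
proof (rule eq_matI)
  fix i j assume "i < dim_row (0\<^sub>m m n :: complex mat)" "j < dim_col (0\<^sub>m m n :: complex mat)"
  hence i: "i < m" and j: "j < n" by auto
  have "\<forall>i\<in>{..<m}. (\<Sum>j<n. (cmod (A $$ (i,j)))\<^sup>2) = 0"
    using z innerV_self[OF A] by (subst sum_nonneg_eq_0_iff[symmetric]) (auto intro: sum_nonneg)
  hence "(\<Sum>j<n. (cmod (A $$ (i,j)))\<^sup>2) = 0" using i by auto
  hence "\<forall>j\<in>{..<n}. (cmod (A $$ (i,j)))\<^sup>2 = 0" by (subst sum_nonneg_eq_0_iff[symmetric]) auto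
  thus "A $$ (i,j) = 0\<^sub>m m n $$ (i,j)" using i j by auto
qed (use A in auto)

lemma innerV_BU: assumes P: "P \<in> carrier_mat m n" and Q: "Q \<in> carrier_mat m n" and U: "unitary_mat n U"
  shows "innerV (P * cT U) (Q * cT U) = Re (mtrace (cT Q * P))"
proof -
  have Uc: "U \<in> carrier_mat n n" using U unitaryD by auto
  have "P * cT U * cT (Q * cT U) = P * cT U * (U * cT Q)" using cT_BU[OF Q Uc] by simp
  also have "\<dots> = P * (cT U * (U * cT Q))" using assoc_mult_mat[OF P cT_carrier[OF Uc] mult_carrier_mat[OF Uc cT_carrier[OF Q]]] .
  also have "cT U * (U * cT Q) = (cT U * U) * cT Q" using assoc_mult_mat[OF cT_carrier[OF Uc] Uc cT_carrier[OF Q]] by simp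
  also have "\<dots> = cT Q" using unitaryD(2)[OF U] Q by simp
  finally have "P * cT U * cT (Q * cT U) = P * cT Q" .
  thus ?thesis unfolding innerV_def using mtrace_comm[OF P cT_carrier[OF Q]] by simp
qed

lemma dBBd: assumes B: "B \<in> carrier_mat m n" and F: "F \<in> carrier_mat n n" and G: "G \<in> carrier_mat n n"
  shows "G * cT B * (B * F) = G * (cT B * B) * F"
proof -
  have "G * cT B * (B * F) = G * (cT B * (B * F))" using assoc_mult_mat[OF G cT_carrier[OF B] mult_carrier_mat[OF B F]] .
  also have "cT B * (B * F) = (cT B * B) * F" using assoc_mult_mat[OF cT_carrier[OF B] B F] by simp
  also have "G * ((cT B * B) * F) = G * (cT B * B) * F" using assoc_mult_mat[OF G mult_carrier_mat[OF cT_carrier[OF B] B] F] by simp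
  finally show ?thesis .
qed

lemma cof_scale: assumes B: "cof m n B s" and f: "\<And>i. i < n \<Longrightarrow> 0 \<le> f i"
  shows "cof m n (B * dmat n f) (\<lambda>i. f i * s i)"
proof -
  have Bc: "B \<in> carrier_mat m n" and BB: "cT B * B = dmat n (\<lambda>i. (s i)\<^sup>2)" and sp: "\<And>i. i < n \<Longrightarrow> 0 \<le> s i"
    using B unfolding cof_def by auto
  have "cT (B * dmat n f) * (B * dmat n f) = dmat n f * cT B * (B * dmat n f)" using cT_mult[OF Bc dmat_carrier] by simp
  also have "\<dots> = dmat n f * (cT B * B) * dmat n f" using dBBd[OF Bc dmat_carrier dmat_carrier] .
  also have "\<dots> = dmat n (\<lambda>i. (f i * s i)\<^sup>2)" unfolding BB dmat_mult by (simp add: power2_eq_square mult_ac)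
  finally show ?thesis unfolding cof_def using Bc f sp by auto
qed

lemma innerV_cof: assumes B: "cof m n B s" and U: "unitary_mat n U"
  shows "innerV (B * dmat n f * cT U) (B * dmat n g * cT U) = (\<Sum>i<n. f i * g i * (s i)\<^sup>2)"
proof -
  have Bc: "B \<in> carrier_mat m n" and BB: "cT B * B = dmat n (\<lambda>i. (s i)\<^sup>2)" using B unfolding cof_def by auto
  have "innerV (B * dmat n f * cT U) (B * dmat n g * cT U) = Re (mtrace (cT (B * dmat n g) * (B * dmat n f)))"
    using innerV_BU[OF _ _ U, of "B * dmat n f" m "B * dmat n g"] Bc by simp
  also have "cT (B * dmat n g) * (B * dmat n f) = dmat n g * cT B * (B * dmat n f)" using cT_mult[OF Bc dmat_carrier] by simp
  also have "\<dots> = dmat n g * (cT B * B) * dmat n f" using dBBd[OF Bc dmat_carrier dmat_carrier] .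
  also have "\<dots> = dmat n (\<lambda>i. g i * (s i)\<^sup>2 * f i)" unfolding BB dmat_mult by simp
  also have "mtrace \<dots> = (\<Sum>i<n. complex_of_real (g i * (s i)\<^sup>2 * f i))" unfolding mtrace_def by simp
  finally show ?thesis by (simp add: mult_ac)
qed

definition Mf :: "nat \<Rightarrow> complex mat \<Rightarrow> complex mat \<Rightarrow> (nat \<Rightarrow> real) \<Rightarrow> complex mat" where
  "Mf n B U f = B * dmat n f * cT U"

lemma Mf_dim[simp]: "dim_row (Mf n B U f) = dim_row B" "dim_col (Mf n B U f) = dim_row U"
  unfolding Mf_def by simp_all

lemma Mf_index: assumes "B \<in> carrier_mat m n" "U \<in> carrier_mat n n" "i < m" "j < n"
  shows "Mf n B U f $$ (i,j) = (\<Sum>l<n. B $$ (i,l) * complex_of_real (f l) * cnj (U $$ (j,l)))"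
  unfolding Mf_def using udu_index[OF assms] .

lemma Mf_carrier: "B \<in> carrier_mat m n \<Longrightarrow> U \<in> carrier_mat n n \<Longrightarrow> Mf n B U f \<in> carrier_mat m n"
  unfolding Mf_def by (meson mult_carrier_mat dmat_carrier cT_carrier)

lemma Mf_add: assumes B: "B \<in> carrier_mat m n" and U: "U \<in> carrier_mat n n"
  shows "Mf n B U f + Mf n B U g = Mf n B U (\<lambda>i. f i + g i)"
proof (rule eq_matI)
  fix i j assume "i < dim_row (Mf n B U (\<lambda>i. f i + g i))" "j < dim_col (Mf n B U (\<lambda>i. f i + g i))"
  hence i: "i < m" and j: "j < n" using B U by auto
  show "(Mf n B U f + Mf n B U g) $$ (i,j) = Mf n B U (\<lambda>i. f i + g i) $$ (i,j)"
  proof -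
    have "(Mf n B U f + Mf n B U g) $$ (i,j) = Mf n B U f $$ (i,j) + Mf n B U g $$ (i,j)"
      using B U i j by simp
    also have "\<dots> = (\<Sum>l<n. B $$ (i,l) * complex_of_real (f l) * cnj (U $$ (j,l)) + B $$ (i,l) * complex_of_real (g l) * cnj (U $$ (j,l)))"
      unfolding Mf_index[OF B U i j] sum.distrib ..
    also have "\<dots> = Mf n B U (\<lambda>i. f i + g i) $$ (i,j)"
      unfolding Mf_index[OF B U i j] by (intro sum.cong refl) (simp add: algebra_simps)
    finally show ?thesis .
  qed
qed (use B U in auto)

lemma Mf_minus: assumes B: "B \<in> carrier_mat m n" and U: "U \<in> carrier_mat n n"
  shows "Mf n B U f - Mf n B U g = Mf n B U (\<lambda>i. f i - g i)"
proof (rule eq_matI)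
  fix i j assume "i < dim_row (Mf n B U (\<lambda>i. f i - g i))" "j < dim_col (Mf n B U (\<lambda>i. f i - g i))"
  hence i: "i < m" and j: "j < n" using B U by auto
  show "(Mf n B U f - Mf n B U g) $$ (i,j) = Mf n B U (\<lambda>i. f i - g i) $$ (i,j)"
  proof -
    have "(Mf n B U f - Mf n B U g) $$ (i,j) = Mf n B U f $$ (i,j) - Mf n B U g $$ (i,j)"
      using B U i j by simp
    also have "\<dots> = (\<Sum>l<n. B $$ (i,l) * complex_of_real (f l) * cnj (U $$ (j,l)) - B $$ (i,l) * complex_of_real (g l) * cnj (U $$ (j,l)))"
      unfolding Mf_index[OF B U i j] sum_subtractf ..
    also have "\<dots> = Mf n B U (\<lambda>i. f i - g i) $$ (i,j)"
      unfolding Mf_index[OF B U i j] by (intro sum.cong refl) (simp add: algebra_simps)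
    finally show ?thesis .
  qed
qed (use B U in auto)

lemma cof_col_zero: assumes B: "cof m n B s" and l: "l < n" and s0: "s l = 0" and i: "i < m"
  shows "B $$ (i,l) = 0"
proof -
  have Bc: "B \<in> carrier_mat m n" using B unfolding cof_def by auto
  have "vnorm (col B l) = 0" using cof_col_norm[OF B l] s0 by simp
  hence "(\<Sum>k<m. (cmod (col B l $ k))\<^sup>2) = 0" using vnorm_sq[of "col B l" m] Bc by (simp add: carrier_vecI)
  hence "\<forall>k\<in>{..<m}. (cmod (col B l $ k))\<^sup>2 = 0" by (subst sum_nonneg_eq_0_iff[symmetric]) auto
  thus ?thesis using i Bc l by auto
qed

lemma Mf_cong: assumes B: "cof m n B s" and U: "U \<in> carrier_mat n n"
  and fg: "\<And>i. i < n \<Longrightarrow> s i \<noteq> 0 \<Longrightarrow> f i = g i"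
  shows "Mf n B U f = Mf n B U g"
proof -
  have Bc: "B \<in> carrier_mat m n" using B unfolding cof_def by auto
  show ?thesis
  proof (rule eq_matI)
    fix i j assume "i < dim_row (Mf n B U g)" "j < dim_col (Mf n B U g)"
    hence i: "i < m" and j: "j < n" using Bc U by auto
    show "Mf n B U f $$ (i,j) = Mf n B U g $$ (i,j)"
      unfolding Mf_index[OF Bc U i j]
    proof (rule sum.cong)
      fix l assume "l \<in> {..<n}"
      hence l: "l < n" by simp
      show "B $$ (i, l) * complex_of_real (f l) * cnj (U $$ (j, l)) = B $$ (i, l) * complex_of_real (g l) * cnj (U $$ (j, l))"
        using fg[OF l] cof_col_zero[OF B l _ i] by (cases "s l = 0") auto
    qed simp
  qed (use Bc U in auto)
qed

lemma Mf_one: assumes "B \<in> carrier_mat m n" shows "Mf n B U (\<lambda>_. 1) = B * cT U"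
proof -
  have "B * dmat n (\<lambda>_. 1) = B" by (rule eq_matI) (use assms in \<open>auto simp: mult_dmat_right\<close>)
  thus ?thesis unfolding Mf_def by simp
qed

lemma Mf_zero: assumes B: "B \<in> carrier_mat m n" and U: "U \<in> carrier_mat n n" shows "Mf n B U (\<lambda>_. 0) = 0\<^sub>m m n"
proof (rule eq_matI)
  fix i j assume "i < dim_row (0\<^sub>m m n :: complex mat)" "j < dim_col (0\<^sub>m m n :: complex mat)"
  hence i: "i < m" and j: "j < n" by auto
  show "Mf n B U (\<lambda>_. 0) $$ (i,j) = 0\<^sub>m m n $$ (i,j)" using i j by (simp add: Mf_index[OF B U i j])
qed (use B U in auto)


lemma nuclear_nonneg: assumes A: "A \<in> carrier_mat m n" shows "0 \<le> nuclear_norm A"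
proof -
  obtain B s U where B: "cof m n B s" and U: "unitary_mat n U" and AB: "A = B * cT U" using svd_exists[OF A] by blast
  have "\<And>i. i < n \<Longrightarrow> 0 \<le> s i" using B unfolding cof_def by auto
  thus ?thesis unfolding AB nuclear_cof[OF B U] by (intro sum_nonneg) auto
qed

lemma nuclear_zero: assumes A: "A \<in> carrier_mat m n" and z: "nuclear_norm A = 0" shows "A = 0\<^sub>m m n"
proof -
  obtain B s U where B: "cof m n B s" and U: "unitary_mat n U" and AB: "A = B * cT U" using svd_exists[OF A] by blast
  have Bc: "B \<in> carrier_mat m n" using B unfolding cof_def by auto
  have Uc: "U \<in> carrier_mat n n" using U unitaryD by auto
  have sp: "\<And>i. i < n \<Longrightarrow> 0 \<le> s i" using B unfolding cof_def by auto
  have "(\<Sum>i<n. s i) = 0" using z unfolding AB nuclear_cof[OF B U] .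
  hence s0: "\<forall>i\<in>{..<n}. s i = 0" using sp by (subst sum_nonneg_eq_0_iff[symmetric]) auto
  have "A = Mf n B U (\<lambda>_. 1)" unfolding AB using Mf_one[OF Bc] by simp
  also have "\<dots> = Mf n B U (\<lambda>_. 0)" by (rule Mf_cong[OF B Uc]) (use s0 in auto)
  also have "\<dots> = 0\<^sub>m m n" using Mf_zero[OF Bc Uc] .
  finally show ?thesis .
qed

lemma norm2V_nonneg: "A \<in> carrier_mat m n \<Longrightarrow> 0 \<le> norm2V A"
  unfolding norm2V_def using innerV_self_nonneg by simp

lemma norm2V_zero: "norm2V (0\<^sub>m m n) = 0"
  unfolding norm2V_def using innerV_self[of "0\<^sub>m m n" m n] by simp

lemma Mf_is: "Mf n B U f = (B * dmat n f) * cT U" unfolding Mf_def ..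


lemma tight_all: assumes c: "c \<in> carrier_mat m n" and n: "0 < n"
  shows "tight nuclear_norm spectral_norm m n c"
  unfolding tight_def
proof (intro allI impI)
  fix a b assume X2: "pq_decomp nuclear_norm norm2V m n c a b"
  have ac: "a \<in> carrier_mat m n" and bc: "b \<in> carrier_mat m n" and cab: "c = a + b"
    using X2 unfolding pq_decomp_def by blast+
  have par: "\<And>a' b'. a' \<in> carrier_mat m n \<Longrightarrow> b' \<in> carrier_mat m n \<Longrightarrow> c = a' + b' \<Longrightarrow>
        nuclear_norm a' > nuclear_norm a \<or> norm2V b' > norm2V b \<or> (nuclear_norm a', norm2V b') = (nuclear_norm a, norm2V b)"
    using X2 unfolding pq_decomp_def by blast
  obtain B s U where B: "cof m n B s" and U: "unitary_mat n U" and cBU: "c = B * cT U" using svd_exists[OF c] by blast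
  have Bc: "B \<in> carrier_mat m n" and sp: "\<And>i. i < n \<Longrightarrow> 0 \<le> s i" using B unfolding cof_def by auto
  have Uc: "U \<in> carrier_mat n n" using U unitaryD by auto
  define \<phi> where "\<phi> = (\<lambda>t. \<Sum>i<n. max (s i - t) 0)"
  have a_le: "nuclear_norm a \<le> nuclear_norm c"
  proof (rule ccontr)
    assume neg: "\<not> nuclear_norm a \<le> nuclear_norm c"
    have "c = c + 0\<^sub>m m n" using c by simp
    from par[OF c zero_carrier_mat this] norm2V_zero[of m n] norm2V_nonneg[OF bc] neg show False by auto
  qed
  have nc: "nuclear_norm c = \<phi> 0" unfolding cBU nuclear_cof[OF B U] \<phi>_def using sp by (intro sum.cong) auto
  define T where "T = (\<Sum>i<n. s i)"
  have sT: "s i \<le> T" if "i < n" for i unfolding T_def using member_le_sum[of i "{..<n}" s] sp that by auto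
  have T0: "0 \<le> T" unfolding T_def using sp by (intro sum_nonneg) auto
  have phiT: "\<phi> T = 0" unfolding \<phi>_def using sT by (intro sum.neutral) auto
  have cont: "continuous_on {0..T} \<phi>" unfolding \<phi>_def by (intro continuous_intros)
  obtain t where t0: "0 \<le> t" and tT: "t \<le> T" and phit: "\<phi> t = nuclear_norm a"
    using IVT2'[of \<phi> T "nuclear_norm a" 0, OF _ _ T0 cont] phiT nuclear_nonneg[OF ac] a_le nc by auto
  define fa where "fa = (\<lambda>i. if s i = 0 then 0 else max (s i - t) 0 / s i)"
  define fb where "fb = (\<lambda>i. if s i = 0 then 0 else min (s i) t / s i)"
  define aT where "aT = Mf n B U fa"
  define bT where "bT = Mf n B U fb"
  have fa_s: "fa i * s i = max (s i - t) 0" if "i < n" for i using sp[OF that] t0 unfolding fa_def by auto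
  have fb_s: "fb i * s i = min (s i) t" if "i < n" for i using sp[OF that] t0 unfolding fb_def by auto
  have fa0: "0 \<le> fa i" if "i < n" for i using sp[OF that] t0 unfolding fa_def by auto
  have fb0: "0 \<le> fb i" if "i < n" for i using sp[OF that] t0 unfolding fb_def by auto
  have cofa: "cof m n (B * dmat n fa) (\<lambda>i. fa i * s i)" by (rule cof_scale[OF B fa0])
  have cofb: "cof m n (B * dmat n fb) (\<lambda>i. fb i * s i)" by (rule cof_scale[OF B fb0])
  have aTc: "aT \<in> carrier_mat m n" unfolding aT_def using Mf_carrier[OF Bc Uc] .
  have bTc: "bT \<in> carrier_mat m n" unfolding bT_def using Mf_carrier[OF Bc Uc] .
  have nuc_at: "nuclear_norm aT = \<phi> t" unfolding aT_def Mf_is nuclear_cof[OF cofa U] \<phi>_def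
    using fa_s by (intro sum.cong) auto
  have spec_bt: "spectral_norm bT = Max ((\<lambda>i. min (s i) t) ` {..<n})"
    unfolding bT_def Mf_is spectral_cof[OF cofb U n] using fb_s by (intro arg_cong[where f=Max] image_cong) auto
  have spec_bt_le: "spectral_norm bT \<le> t" unfolding spec_bt using n by (subst Max_le_iff) auto
  have sum_c: "aT + bT = c"
  proof -
    have "aT + bT = Mf n B U (\<lambda>i. fa i + fb i)" unfolding aT_def bT_def using Mf_add[OF Bc Uc] .
    also have "\<dots> = Mf n B U (\<lambda>_. 1)"
    proof (rule Mf_cong[OF B Uc])
      fix i assume i: "i < n" and si: "s i \<noteq> 0"
      hence spos: "s i > 0" using sp[OF i] by simp
      have "max (s i - t) 0 + min (s i) t = s i" by (cases "t \<le> s i") auto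
      thus "fa i + fb i = 1" unfolding fa_def fb_def using si spos by (simp add: add_divide_distrib[symmetric])
    qed
    also have "\<dots> = c" unfolding cBU using Mf_one[OF Bc] .
    finally show ?thesis .
  qed
  have ip_ab: "innerV bT aT = t * \<phi> t"
  proof -
    have "innerV bT aT = (\<Sum>i<n. fb i * fa i * (s i)\<^sup>2)" unfolding aT_def bT_def Mf_def using innerV_cof[OF B U] .
    also have "\<dots> = (\<Sum>i<n. t * max (s i - t) 0)"
    proof (rule sum.cong)
      fix i assume "i \<in> {..<n}"
      hence i: "i < n" by simp
      have "fb i * fa i * (s i)\<^sup>2 = (fb i * s i) * (fa i * s i)" by (simp add: power2_eq_square mult_ac)
      also have "\<dots> = min (s i) t * max (s i - t) 0" using fa_s[OF i] fb_s[OF i] by simp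
      also have "\<dots> = t * max (s i - t) 0" by (cases "t \<le> s i") auto
      finally show "fb i * fa i * (s i)\<^sup>2 = t * max (s i - t) 0" .
    qed simp
    finally show ?thesis unfolding \<phi>_def by (simp add: sum_distrib_left)
  qed
  have a_eq: "a = aT"
  proof -
    define d where "d = aT - a"
    have dc: "d \<in> carrier_mat m n" unfolding d_def using minus_carrier_mat[OF ac] .
    have bd: "b = bT + d"
    proof (rule eq_matI)
      fix i j assume "i < dim_row (bT + d)" "j < dim_col (bT + d)"
      hence i: "i < m" and j: "j < n" using bTc dc by auto
      have "c $$ (i,j) = a $$ (i,j) + b $$ (i,j)" using cab ac bc i j by simp
      moreover have "c $$ (i,j) = aT $$ (i,j) + bT $$ (i,j)" using sum_c[symmetric] aTc bTc i j by simp
      ultimately have e: "aT $$ (i,j) + bT $$ (i,j) = a $$ (i,j) + b $$ (i,j)" by simp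
      have "(bT + d) $$ (i,j) = bT $$ (i,j) + (aT $$ (i,j) - a $$ (i,j))" unfolding d_def using aTc bTc ac i j by simp
      also have "\<dots> = (aT $$ (i,j) + bT $$ (i,j)) - a $$ (i,j)" by simp
      also have "\<dots> = b $$ (i,j)" unfolding e by simp
      finally show "b $$ (i,j) = (bT + d) $$ (i,j)" by simp
    qed (use bc bTc dc in auto)
    have "innerV b b = innerV bT bT + 2 * innerV bT d + innerV d d"
      unfolding bd using bTc dc
      by (simp add: innerV_add1[of _ m n] innerV_add2[of _ m n] innerV_sym[of d m n bT])
    moreover have "innerV bT d = innerV bT aT - innerV bT a" unfolding d_def using innerV_minus2[OF aTc ac bTc] .
    moreover have "innerV bT a \<le> t * \<phi> t"
    proof -
      have "innerV bT a = innerV a bT" using innerV_sym[OF bTc ac] .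
      also have "\<dots> \<le> nuclear_norm a * spectral_norm bT" using trace_duality[OF ac bTc n] .
      also have "\<dots> \<le> nuclear_norm a * t" using spec_bt_le nuclear_nonneg[OF ac] by (rule mult_left_mono)
      finally show ?thesis using phit by (simp add: mult.commute)
    qed
    ultimately have ge: "innerV b b \<ge> innerV bT bT + innerV d d" using ip_ab by simp
    have "norm2V b \<le> norm2V bT" using par[OF aTc bTc sum_c[symmetric]] nuc_at phit by auto
    hence "innerV b b \<le> innerV bT bT" unfolding norm2V_def
      using innerV_self_nonneg[OF bc] innerV_self_nonneg[OF bTc] by simp
    hence "innerV d d \<le> 0" using ge by simp
    hence "innerV d d = 0" using innerV_self_nonneg[OF dc] by simp
    hence "d = 0\<^sub>m m n" using innerV_self_zero[OF dc] by simp
    thus ?thesis unfolding d_def using ac aTc by (auto simp: mat_eq_iff)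
  qed
  have b_eq: "b = bT"
  proof (rule eq_matI)
    fix i j assume "i < dim_row bT" "j < dim_col bT"
    hence i: "i < m" and j: "j < n" using bTc by auto
    have "c $$ (i,j) = a $$ (i,j) + b $$ (i,j)" using cab ac bc i j by simp
    moreover have "c $$ (i,j) = aT $$ (i,j) + bT $$ (i,j)" using sum_c[symmetric] aTc bTc i j by simp
    ultimately show "b $$ (i,j) = bT $$ (i,j)" using a_eq by simp
  qed (use bc bTc in auto)
  show "pq_decomp nuclear_norm spectral_norm m n c a b"
    unfolding pq_decomp_def
  proof (intro conjI allI impI)
    show "a \<in> carrier_mat m n" "b \<in> carrier_mat m n" "c = a + b" using ac bc cab by auto
    fix a' b' assume H: "a' \<in> carrier_mat m n \<and> b' \<in> carrier_mat m n \<and> c = a' + b'"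
    hence a'c: "a' \<in> carrier_mat m n" and b'c: "b' \<in> carrier_mat m n" and cab': "c = a' + b'" by auto
    show "nuclear_norm a' > nuclear_norm a \<or> spectral_norm b' > spectral_norm b \<or>
      (nuclear_norm a', spectral_norm b') = (nuclear_norm a, spectral_norm b)"
    proof (cases "\<exists>j<n. s j > t")
      case False
      hence phi0: "\<phi> t = 0" unfolding \<phi>_def by (intro sum.neutral) auto
      show ?thesis
      proof (cases "nuclear_norm a' > nuclear_norm a")
        case True thus ?thesis by simp
      next
        case False
        hence na'0: "nuclear_norm a' = 0" using nuclear_nonneg[OF a'c] a_eq nuc_at phi0 by simp
        hence a'0: "a' = 0\<^sub>m m n" using nuclear_zero[OF a'c] by simp
        have na0: "nuclear_norm a = 0" using a_eq nuc_at phi0 by simp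
        have "b' = c" using cab' a'0 b'c by simp
        moreover have "b = c"
        proof -
          have "a = 0\<^sub>m m n" using nuclear_zero[OF ac na0] .
          thus ?thesis using cab bc by simp
        qed
        ultimately show ?thesis using na'0 na0 by simp
      qed
    next
      case True
      then obtain j where j: "j < n" "s j > t" by blast
      have spec_b: "spectral_norm b = t"
      proof -
        have "min (s j) t \<in> (\<lambda>i. min (s i) t) ` {..<n}" using j by blast
        hence "min (s j) t \<le> Max ((\<lambda>i. min (s i) t) ` {..<n})" by (intro Max_ge) auto
        hence "t \<le> spectral_norm bT" unfolding spec_bt using j by simp
        thus ?thesis using spec_bt_le b_eq by simp
      qed
      define fg where "fg = (\<lambda>i. if s i > t then 1 / s i else 0)"
      define G where "G = Mf n B U fg"
      have fg_s: "fg i * s i = (if s i > t then 1 else 0)" if "i < n" for i using t0 unfolding fg_def by auto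
      have fg0: "0 \<le> fg i" if "i < n" for i using sp[OF that] unfolding fg_def by auto
      have cofg: "cof m n (B * dmat n fg) (\<lambda>i. fg i * s i)" by (rule cof_scale[OF B fg0])
      have Gc: "G \<in> carrier_mat m n" unfolding G_def using Mf_carrier[OF Bc Uc] .
      define k where "k = (\<Sum>i<n. if s i > t then 1 else 0 :: real)"
      have kpos: "k > 0"
      proof -
        have "(if s j > t then 1 else 0 :: real) \<le> k" unfolding k_def
          using j by (intro member_le_sum) auto
        thus ?thesis using j by simp
      qed
      have nucG: "nuclear_norm G = k" unfolding G_def Mf_is nuclear_cof[OF cofg U] k_def
        using fg_s by (intro sum.cong) auto
      have specG: "spectral_norm G \<le> 1"
      proof -
        have "spectral_norm G = Max ((\<lambda>i. fg i * s i) ` {..<n})" unfolding G_def Mf_is using spectral_cof[OF cofg U n] .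
        also have "\<dots> \<le> 1" using n fg_s by (subst Max_le_iff) auto
        finally show ?thesis .
      qed
      have ipcG: "innerV c G = (\<Sum>i<n. if s i > t then s i else 0)"
      proof -
        have "innerV c G = innerV (Mf n B U (\<lambda>_. 1)) G" unfolding cBU using Mf_one[OF Bc] by simp
        also have "\<dots> = (\<Sum>i<n. 1 * fg i * (s i)\<^sup>2)" unfolding G_def Mf_def using innerV_cof[OF B U] .
        also have "\<dots> = (\<Sum>i<n. if s i > t then s i else 0)"
        proof (rule sum.cong)
          fix i assume "i \<in> {..<n}"
          hence i: "i < n" by simp
          have "1 * fg i * (s i)\<^sup>2 = (fg i * s i) * s i" by (simp add: power2_eq_square)
          thus "1 * fg i * (s i)\<^sup>2 = (if s i > t then s i else 0)" using fg_s[OF i] by simp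
        qed simp
        finally show ?thesis .
      qed
      have phi_k: "\<phi> t = (\<Sum>i<n. if s i > t then s i else 0) - t * k"
      proof -
        have "\<phi> t = (\<Sum>i<n. (if s i > t then s i else 0) - t * (if s i > t then 1 else 0))"
          unfolding \<phi>_def by (intro sum.cong) auto
        thus ?thesis unfolding k_def by (simp add: sum_subtractf sum_distrib_left)
      qed
      have split: "innerV c G = innerV a' G + innerV b' G" unfolding cab' using innerV_add1[OF a'c b'c Gc] .
      have ia: "innerV a' G \<le> nuclear_norm a'"
      proof -
        have "innerV a' G \<le> nuclear_norm a' * spectral_norm G" using trace_duality[OF a'c Gc n] .
        also have "\<dots> \<le> nuclear_norm a' * 1" using specG nuclear_nonneg[OF a'c] by (rule mult_left_mono)
        finally show ?thesis by simp
      qed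
      have ib: "innerV b' G \<le> k * spectral_norm b'"
      proof -
        have "innerV b' G = innerV G b'" using innerV_sym[OF b'c Gc] .
        also have "\<dots> \<le> nuclear_norm G * spectral_norm b'" using trace_duality[OF Gc b'c n] .
        finally show ?thesis using nucG by simp
      qed
      show ?thesis
      proof (rule ccontr)
        assume neg: "\<not> ?thesis"
        hence le1: "nuclear_norm a' \<le> \<phi> t" and le2: "spectral_norm b' \<le> t"
          and ne: "(nuclear_norm a', spectral_norm b') \<noteq> (\<phi> t, t)"
          using a_eq nuc_at spec_b by auto
        have "k * spectral_norm b' \<le> k * t" using le2 kpos by simp
        have tot: "\<phi> t + t * k \<le> nuclear_norm a' + k * spectral_norm b'" using ipcG split ia ib phi_k by simp
        hence e1: "nuclear_norm a' = \<phi> t" using le1 \<open>k * spectral_norm b' \<le> k * t\<close> by (simp add: mult.commute)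
        hence "k * t \<le> k * spectral_norm b'" using tot by (simp add: mult.commute)
        hence "t \<le> spectral_norm b'" using kpos by simp
        hence "spectral_norm b' = t" using le2 by simp
        thus False using ne e1 by simp
      qed
    qed
  qed
qed


lemma block_id_carrier[simp]: "block_id m n k \<in> carrier_mat m n" unfolding block_id_def by auto
lemma block_id_dim[simp]: "dim_row (block_id m n k) = m" "dim_col (block_id m n k) = n"
  unfolding block_id_def by auto
lemma block_id_index[simp]: "i < m \<Longrightarrow> j < n \<Longrightarrow> block_id m n k $$ (i,j) = (if i = j \<and> i < k then 1 else 0)"
  unfolding block_id_def by auto

definition BB :: "nat \<Rightarrow> nat \<Rightarrow> complex mat \<Rightarrow> real \<Rightarrow> nat \<Rightarrow> complex mat" where
  "BB m n W x a = W * (complex_of_real x \<cdot>\<^sub>m block_id m n a)"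

lemma BB_carrier: "W \<in> carrier_mat m m \<Longrightarrow> BB m n W x a \<in> carrier_mat m n"
  unfolding BB_def by simp

lemma gen_assoc: assumes X: "X \<in> carrier_mat p m" and W: "W \<in> carrier_mat m m" and Y: "Y \<in> carrier_mat m q"
  shows "X * cT W * (W * Y) = X * (cT W * W) * Y"
proof -
  have "X * cT W * (W * Y) = X * (cT W * (W * Y))" using assoc_mult_mat[OF X cT_carrier[OF W] mult_carrier_mat[OF W Y]] .
  also have "cT W * (W * Y) = (cT W * W) * Y" using assoc_mult_mat[OF cT_carrier[OF W] W Y] by simp
  also have "X * ((cT W * W) * Y) = X * (cT W * W) * Y" using assoc_mult_mat[OF X mult_carrier_mat[OF cT_carrier[OF W] W] Y] by simp
  finally show ?thesis .
qed

lemma BB_prod: assumes W: "unitary_mat m W" and a: "a \<le> m"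
  shows "cT (BB m n W y b) * BB m n W x a = dmat n (\<lambda>i. if i < a \<and> i < b then x * y else 0)"
proof -
  have Wc: "W \<in> carrier_mat m m" using W unitaryD by auto
  let ?A = "complex_of_real x \<cdot>\<^sub>m block_id m n a"
  let ?B = "complex_of_real y \<cdot>\<^sub>m block_id m n b"
  have Ac: "?A \<in> carrier_mat m n" and Bc: "?B \<in> carrier_mat m n" by auto
  have "cT (BB m n W y b) * BB m n W x a = cT ?B * cT W * (W * ?A)" unfolding BB_def using cT_mult[OF Wc Bc] by simp
  also have "\<dots> = cT ?B * (cT W * W) * ?A" using gen_assoc[OF cT_carrier[OF Bc] Wc Ac] .
  also have "\<dots> = cT ?B * ?A" using unitaryD(2)[OF W] right_mult_one_mat[OF cT_carrier[OF Bc]] by simp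
  also have "cT ?B * ?A = dmat n (\<lambda>i. if i < a \<and> i < b then x * y else 0)"
  proof (rule eq_matI)
    fix i j assume "i < dim_row (dmat n (\<lambda>i. if i < a \<and> i < b then x * y else 0))"
      "j < dim_col (dmat n (\<lambda>i. if i < a \<and> i < b then x * y else 0))"
    hence i: "i < n" and j: "j < n" by auto
    have "(cT ?B * ?A) $$ (i,j) = (\<Sum>l<m. cT ?B $$ (i,l) * ?A $$ (l,j))"
      by (rule mult_index[of _ n m _ n]) (use i j in auto)
    also have "\<dots> = (\<Sum>l<m. if l = i then (if i < a \<and> i = j \<and> i < b then complex_of_real (x * y) else 0) else 0)"
    proof (rule sum.cong[OF refl])
      fix l assume "l \<in> {..<m}"
      hence l: "l < m" by simp
      have e1: "cT ?B $$ (i,l) = cnj (complex_of_real y * (if l = i \<and> l < b then 1 else 0))"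
        using i l by simp
      have e2: "?A $$ (l,j) = complex_of_real x * (if l = j \<and> l < a then 1 else 0)" using j l by simp
      show "cT ?B $$ (i,l) * ?A $$ (l,j) = (if l = i then (if i < a \<and> i = j \<and> i < b then complex_of_real (x * y) else 0) else 0)"
        unfolding e1 e2 by (cases "l = i"; cases "i = j") auto
    qed
    also have "\<dots> = (if i < a \<and> i = j \<and> i < b then complex_of_real (x * y) else 0)"
      using a by (cases "i < a \<and> i = j \<and> i < b") (auto simp: sum.delta)
    finally show "(cT ?B * ?A) $$ (i,j) = dmat n (\<lambda>i. if i < a \<and> i < b then x * y else 0) $$ (i,j)"
      using i j by auto
  qed auto
  finally show ?thesis .
qed

lemma sum_if_less: assumes "k \<le> n" shows "(\<Sum>i<n. if i < k then (g::real) else 0) = real k * g"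
proof -
  have "(\<Sum>i<n. if i < k then g else 0) = (\<Sum>i\<in>{i\<in>{..<n}. i < k}. g)"
    using sum.inter_filter[of "{..<n}" "\<lambda>_. g" "\<lambda>i. i < k"] by simp
  also have "{i\<in>{..<n}. i < k} = {..<k}" using assms by auto
  finally show ?thesis by simp
qed

lemma Cpart_BB: assumes W: "W \<in> carrier_mat m m" and U: "U \<in> carrier_mat n n"
  shows "Cpart m n r lam mu W U j = BB m n W (gap r lam j) (ksum mu j) * cT U"
proof -
  let ?g = "complex_of_real (gap r lam j)"
  let ?E = "block_id m n (ksum mu j)"
  have "BB m n W (gap r lam j) (ksum mu j) * cT U = (?g \<cdot>\<^sub>m (W * ?E)) * cT U"
    unfolding BB_def using mult_smult_distrib[OF W block_id_carrier] by simp
  also have "\<dots> = ?g \<cdot>\<^sub>m (W * ?E * cT U)" using mult_smult_assoc_mat[OF mult_carrier_mat[OF W block_id_carrier] cT_carrier[OF U]] .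
  finally show ?thesis unfolding Cpart_def by simp
qed

lemma BB_cof: assumes W: "unitary_mat m W" and k: "k \<le> m" and g: "0 \<le> g"
  shows "cof m n (BB m n W g k) (\<lambda>i. if i < k then g else 0)"
proof -
  have Wc: "W \<in> carrier_mat m m" using W unitaryD by auto
  have "cT (BB m n W g k) * BB m n W g k = dmat n (\<lambda>i. if i < k \<and> i < k then g * g else 0)" using BB_prod[OF W k] .
  also have "\<dots> = dmat n (\<lambda>i. (if i < k then g else 0)\<^sup>2)" by (rule arg_cong[where f="dmat n"]) (auto simp: power2_eq_square)
  finally show ?thesis unfolding cof_def using BB_carrier[OF Wc] g by auto
qed

lemma BB_norms: assumes W: "unitary_mat m W" and U: "unitary_mat n U" and k: "k \<le> min m n" and k1: "1 \<le> k" and g: "0 \<le> g"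
  shows "nuclear_norm (BB m n W g k * cT U) = real k * g" "spectral_norm (BB m n W g k * cT U) = g"
proof -
  have B: "cof m n (BB m n W g k) (\<lambda>i. if i < k then g else 0)" using BB_cof[OF W _ g] k by simp
  show "nuclear_norm (BB m n W g k * cT U) = real k * g" unfolding nuclear_cof[OF B U] using sum_if_less k by simp
  have n: "0 < n" using k k1 by simp
  have "spectral_norm (BB m n W g k * cT U) = Max ((\<lambda>i. if i < k then g else 0) ` {..<n})" using spectral_cof[OF B U n] .
  also have "\<dots> = g"
  proof (rule Max_eqI)
    show "g \<in> (\<lambda>i. if i < k then g else 0) ` {..<n}" using n k1 by (intro image_eqI[of _ _ 0]) auto
  qed (use g in auto)
  finally show "spectral_norm (BB m n W g k * cT U) = g" .
qed

lemma BB_inner: assumes W: "unitary_mat m W" and U: "unitary_mat n U" and a: "a \<le> min m n" and b: "b \<le> min m n"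
  shows "innerV (BB m n W x a * cT U) (BB m n W y b * cT U) = real (min a b) * x * y"
proof -
  have Wc: "W \<in> carrier_mat m m" using W unitaryD by auto
  have "innerV (BB m n W x a * cT U) (BB m n W y b * cT U) = Re (mtrace (cT (BB m n W y b) * BB m n W x a))"
    using innerV_BU[OF BB_carrier[OF Wc] BB_carrier[OF Wc] U] .
  also have "cT (BB m n W y b) * BB m n W x a = dmat n (\<lambda>i. if i < a \<and> i < b then x * y else 0)"
    using BB_prod[OF W] a by simp
  also have "mtrace \<dots> = complex_of_real (\<Sum>i<n. if i < min a b then x * y else 0)"
    unfolding mtrace_def of_real_sum by (intro sum.cong) auto
  also have "(\<Sum>i<n. if i < min a b then x * y else 0) = real (min a b) * (x * y)" using sum_if_less[of "min a b" n "x * y"] a b by (simp add: min_le_iff_disj)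
  finally show ?thesis by simp
qed


lemma ksum_0[simp]: "ksum mu 0 = 0" unfolding ksum_def by simp
lemma ksum_Suc: "ksum mu (Suc j) = ksum mu j + mu (Suc j)" unfolding ksum_def by simp

lemma ksum_mono: "j \<le> j' \<Longrightarrow> ksum mu j \<le> ksum mu j'"
  by (induction j' rule: dec_induct) (auto simp: ksum_Suc)

lemma ind_split: "(if i < ksum mu j then 1 else 0 :: real) = (\<Sum>p\<in>{1..j}. if ksum mu (p - 1) \<le> i \<and> i < ksum mu p then 1 else 0)"
proof (induction j)
  case 0 thus ?case by simp
next
  case (Suc j)
  have "(\<Sum>p\<in>{1..Suc j}. if ksum mu (p - 1) \<le> i \<and> i < ksum mu p then 1 else 0 :: real)
      = (\<Sum>p\<in>{1..j}. if ksum mu (p - 1) \<le> i \<and> i < ksum mu p then 1 else 0) + (if ksum mu j \<le> i \<and> i < ksum mu (Suc j) then 1 else 0)"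
    by simp
  also have "\<dots> = (if i < ksum mu (Suc j) then 1 else 0)" unfolding Suc.IH[symmetric] by (auto simp: ksum_Suc)
  finally show ?case by simp
qed

lemma gap_tele: assumes "1 \<le> p" "p \<le> r" shows "(\<Sum>j\<in>{p..r}. gap r lam j) = lam p"
  using assms
proof (induction "r - p" arbitrary: p)
  case 0 thus ?case unfolding gap_def by simp
next
  case (Suc d)
  hence pr: "p < r" by simp
  have "(\<Sum>j\<in>{p..r}. gap r lam j) = gap r lam p + (\<Sum>j\<in>{Suc p..r}. gap r lam j)"
    using pr by (simp add: sum.atLeast_Suc_atMost)
  also have "(\<Sum>j\<in>{Suc p..r}. gap r lam j) = lam (Suc p)" using Suc pr by (intro Suc.hyps) auto
  finally show ?case unfolding gap_def using pr by simp
qed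

lemma telescope:
  "(\<Sum>j\<in>{1..r}. gap r lam j * (if i < ksum mu j then 1 else 0))
    = (\<Sum>j\<in>{1..r}. if ksum mu (j - 1) \<le> i \<and> i < ksum mu j then lam j else 0)"
proof -
  define b where "b = (\<lambda>p. if ksum mu (p - 1) \<le> i \<and> i < ksum mu p then 1 else 0 :: real)"
  have "(\<Sum>j\<in>{1..r}. gap r lam j * (if i < ksum mu j then 1 else 0))
      = (\<Sum>j\<in>{1..r}. \<Sum>p\<in>{1..r}. (if p \<le> j then gap r lam j * b p else 0))"
  proof (rule sum.cong[OF refl])
    fix j assume j: "j \<in> {1..r}"
    have "gap r lam j * (if i < ksum mu j then 1 else 0) = gap r lam j * (\<Sum>p\<in>{1..j}. b p)"
      unfolding b_def ind_split[of i mu j] ..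
    also have "\<dots> = (\<Sum>p\<in>{1..j}. gap r lam j * b p)" by (simp add: sum_distrib_left)
    also have "\<dots> = (\<Sum>p\<in>{1..r}. if p \<le> j then gap r lam j * b p else 0)"
    proof -
      have "{1..j} = {p \<in> {1..r}. p \<le> j}" using j by auto
      hence "(\<Sum>p\<in>{1..j}. gap r lam j * b p) = (\<Sum>p\<in>{p \<in> {1..r}. p \<le> j}. gap r lam j * b p)" by simp
      also have "\<dots> = (\<Sum>p\<in>{1..r}. if p \<le> j then gap r lam j * b p else 0)" by (rule sum.inter_filter) simp
      finally show ?thesis .
    qed
    finally show "gap r lam j * (if i < ksum mu j then 1 else 0) = (\<Sum>p\<in>{1..r}. if p \<le> j then gap r lam j * b p else 0)" .
  qed
  also have "\<dots> = (\<Sum>p\<in>{1..r}. \<Sum>j\<in>{1..r}. (if p \<le> j then gap r lam j * b p else 0))" by (rule sum.swap)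
  also have "\<dots> = (\<Sum>p\<in>{1..r}. b p * lam p)"
  proof (rule sum.cong[OF refl])
    fix p assume p: "p \<in> {1..r}"
    have "(\<Sum>j\<in>{1..r}. (if p \<le> j then gap r lam j * b p else 0)) = (\<Sum>j\<in>{j\<in>{1..r}. p \<le> j}. gap r lam j * b p)"
      by (rule sum.inter_filter[symmetric]) simp
    also have "{j\<in>{1..r}. p \<le> j} = {p..r}" using p by auto
    also have "(\<Sum>j\<in>{p..r}. gap r lam j * b p) = b p * lam p"
      using gap_tele[of p r lam] p by (simp add: sum_distrib_left[symmetric] mult.commute)
    finally show "(\<Sum>j\<in>{1..r}. (if p \<le> j then gap r lam j * b p else 0)) = b p * lam p" .
  qed
  also have "\<dots> = (\<Sum>j\<in>{1..r}. if ksum mu (j - 1) \<le> i \<and> i < ksum mu j then lam j else 0)"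
    unfolding b_def by (intro sum.cong) auto
  finally show ?thesis .
qed

lemma foldr_carrier: "(\<forall>j\<in>set xs. G j \<in> carrier_mat m n) \<Longrightarrow> foldr (+) (map G xs) (0\<^sub>m m n) \<in> carrier_mat m n"
  by (induction xs) auto

lemma foldr_index: "(\<forall>j\<in>set xs. G j \<in> carrier_mat m n) \<Longrightarrow> i < m \<Longrightarrow> l < n \<Longrightarrow>
  foldr (+) (map G xs) (0\<^sub>m m n) $$ (i,l) = sum_list (map (\<lambda>j. G j $$ (i,l)) xs)"
proof (induction xs)
  case Nil thus ?case by simp
next
  case (Cons x xs)
  have S: "foldr (+) (map G xs) (0\<^sub>m m n) \<in> carrier_mat m n" using foldr_carrier[of xs G m n] Cons.prems by auto
  have "foldr (+) (map G (x # xs)) (0\<^sub>m m n) $$ (i,l) = G x $$ (i,l) + foldr (+) (map G xs) (0\<^sub>m m n) $$ (i,l)"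
    using S Cons.prems by simp
  thus ?case using Cons by simp
qed

lemma foldr_WU: assumes W: "W \<in> carrier_mat m m" and U: "U \<in> carrier_mat n n"
  shows "(\<forall>j\<in>set xs. G j \<in> carrier_mat m n) \<Longrightarrow>
    foldr (+) (map (\<lambda>j. W * G j * cT U) xs) (0\<^sub>m m n) = W * foldr (+) (map G xs) (0\<^sub>m m n) * cT U"
proof (induction xs)
  case Nil
  show ?case using W U by simp
next
  case (Cons x xs)
  have Gx: "G x \<in> carrier_mat m n" using Cons.prems by simp
  have S: "foldr (+) (map G xs) (0\<^sub>m m n) \<in> carrier_mat m n" using foldr_carrier Cons.prems by auto
  have "foldr (+) (map (\<lambda>j. W * G j * cT U) (x # xs)) (0\<^sub>m m n)
      = W * G x * cT U + W * foldr (+) (map G xs) (0\<^sub>m m n) * cT U" using Cons by simp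
  also have "\<dots> = (W * G x + W * foldr (+) (map G xs) (0\<^sub>m m n)) * cT U"
    using add_mult_distrib_mat[OF mult_carrier_mat[OF W Gx] mult_carrier_mat[OF W S] cT_carrier[OF U]] by simp
  also have "W * G x + W * foldr (+) (map G xs) (0\<^sub>m m n) = W * (G x + foldr (+) (map G xs) (0\<^sub>m m n))"
    using mult_add_distrib_mat[OF W Gx S] by simp
  finally show ?case by simp
qed


lemma nuclear_zero_mat: "nuclear_norm (0\<^sub>m m n) = 0"
proof -
  have B: "cof m n (0\<^sub>m m n) (\<lambda>_. 0)" unfolding cof_def by (auto simp: mat_eq_iff)
  have U: "unitary_mat n (1\<^sub>m n)" unfolding unitary_mat_def by simp
  have "0\<^sub>m m n * cT (1\<^sub>m n) = (0\<^sub>m m n :: complex mat)" by simp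
  thus ?thesis using nuclear_cof[OF B U] by simp
qed

theorem mainTheorem16:
  fixes m n r :: nat and C W U :: "complex mat" and lam :: "nat \<Rightarrow> real" and mu :: "nat \<Rightarrow> nat"
  assumes "C \<in> carrier_mat m n" and "C \<noteq> 0\<^sub>m m n"
    and "\<forall>j \<in> {1..r}. mu j \<ge> 1"
    and "ksum mu r \<le> min m n"
    and "\<forall>j \<in> {1..<r}. lam j > lam (Suc j)"
    and "r \<ge> 1 \<longrightarrow> lam r > 0"
    and "unitary_mat m W" and "unitary_mat n U"
    and "C = W * svd_diag m n r lam mu * cT U"
  shows "slope_decomp nuclear_norm spectral_norm m n C (map (Cpart m n r lam mu W U) [1..<Suc r])
       \<and> (\<forall>j \<in> {1..r}. spectral_norm (Cpart m n r lam mu W U j) = gap r lam j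
            \<and> nuclear_norm (Cpart m n r lam mu W U j) = real (ksum mu j) * gap r lam j)
       \<and> (\<forall>c \<in> carrier_mat m n. tight nuclear_norm spectral_norm m n c)"
proof -
  note Cc = assms(1) and C0 = assms(2) and mu1 = assms(3) and kle = assms(4) and lamdec = assms(5)
    and lampos = assms(6) and W = assms(7) and U = assms(8) and Ceq = assms(9)
  have Wc: "W \<in> carrier_mat m m" using W unitaryD by auto
  have Uc: "U \<in> carrier_mat n n" using U unitaryD by auto
  have r1: "1 \<le> r"
  proof (rule ccontr)
    assume "\<not> 1 \<le> r"
    hence r0: "r = 0" by simp
    have "svd_diag m n r lam mu = 0\<^sub>m m n" unfolding svd_diag_def r0 by (rule eq_matI) auto
    hence "C = 0\<^sub>m m n" using Ceq Wc Uc by simp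
    thus False using C0 by simp
  qed
  have k_le: "ksum mu j \<le> min m n" if "j \<le> r" for j using ksum_mono[OF that, of mu] kle by simp
  have k_pos: "1 \<le> ksum mu j" if "j \<in> {1..r}" for j
  proof -
    have "ksum mu 1 \<le> ksum mu j" using that by (intro ksum_mono) auto
    moreover have "ksum mu 1 = mu 1" unfolding ksum_def by simp
    moreover have "1 \<le> mu 1" using mu1 r1 by simp
    ultimately show ?thesis by linarith
  qed
  have k_strict: "ksum mu j < ksum mu (Suc j)" if "j < r" for j
  proof -
    have "Suc j \<in> {1..r}" using that by simp
    hence "1 \<le> mu (Suc j)" using mu1 by blast
    thus ?thesis by (simp add: ksum_Suc)
  qed
  have n0: "0 < n" using k_pos[of r] k_le[of r] r1 by simp
  have gpos: "0 < gap r lam j" if "j \<in> {1..r}" for j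
  proof (cases "j = r")
    case True thus ?thesis unfolding gap_def using lampos r1 by simp
  next
    case False thus ?thesis unfolding gap_def using lamdec that by auto
  qed
  have Cp: "Cpart m n r lam mu W U j = BB m n W (gap r lam j) (ksum mu j) * cT U" for j
    using Cpart_BB[OF Wc Uc] .
  have norms: "nuclear_norm (Cpart m n r lam mu W U j) = real (ksum mu j) * gap r lam j
     \<and> spectral_norm (Cpart m n r lam mu W U j) = gap r lam j" if j: "j \<in> {1..r}" for j
    unfolding Cp using BB_norms[OF W U k_le k_pos[OF j] less_imp_le[OF gpos[OF j]]] j by auto
  have part2: "\<forall>j \<in> {1..r}. spectral_norm (Cpart m n r lam mu W U j) = gap r lam j
            \<and> nuclear_norm (Cpart m n r lam mu W U j) = real (ksum mu j) * gap r lam j"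
    using norms by auto
  have part3: "\<forall>c \<in> carrier_mat m n. tight nuclear_norm spectral_norm m n c" using tight_all n0 by auto
  define cs where "cs = map (Cpart m n r lam mu W U) [1..<Suc r]"
  have csn: "cs ! i = Cpart m n r lam mu W U (Suc i)" if "i < r" for i unfolding cs_def using that by (simp del: upt_Suc)
  have lcs: "length cs = r" unfolding cs_def by simp
  have Cpc: "Cpart m n r lam mu W U j \<in> carrier_mat m n" for j
    unfolding Cp using mult_carrier_mat[OF BB_carrier[OF Wc] cT_carrier[OF Uc]] .
  have p1a: "\<forall>x \<in> set cs. x \<in> carrier_mat m n \<and> x \<noteq> 0\<^sub>m m n"
  proof
    fix x assume "x \<in> set cs"
    hence "x \<in> Cpart m n r lam mu W U ` {1..r}"
      unfolding cs_def set_map set_upt atLeastLessThanSuc_atLeastAtMost .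
    then obtain j where j: "j \<in> {1..r}" and x: "x = Cpart m n r lam mu W U j" by auto
    have "nuclear_norm x > 0" unfolding x using norms[OF j] k_pos[OF j] gpos[OF j] by simp
    hence "x \<noteq> 0\<^sub>m m n" using nuclear_zero_mat[of m n] by auto
    thus "x \<in> carrier_mat m n \<and> x \<noteq> 0\<^sub>m m n" using Cpc x by simp
  qed
  define G where "G = (\<lambda>j. complex_of_real (gap r lam j) \<cdot>\<^sub>m block_id m n (ksum mu j))"
  have Gc: "G j \<in> carrier_mat m n" for j unfolding G_def by simp
  have CG: "Cpart m n r lam mu W U j = W * G j * cT U" for j unfolding Cp BB_def G_def ..
  have p1b: "C = foldr (+) cs (0\<^sub>m m n)"
  proof -
    have "foldr (+) cs (0\<^sub>m m n) = foldr (+) (map (\<lambda>j. W * G j * cT U) [1..<Suc r]) (0\<^sub>m m n)"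
      unfolding cs_def CG ..
    also have "\<dots> = W * foldr (+) (map G [1..<Suc r]) (0\<^sub>m m n) * cT U" by (rule foldr_WU[OF Wc Uc]) (use Gc in auto)
    also have "foldr (+) (map G [1..<Suc r]) (0\<^sub>m m n) = svd_diag m n r lam mu"
    proof (rule eq_matI)
      fix i l assume "i < dim_row (svd_diag m n r lam mu)" "l < dim_col (svd_diag m n r lam mu)"
      hence i: "i < m" and l: "l < n" unfolding svd_diag_def by auto
      have "foldr (+) (map G [1..<Suc r]) (0\<^sub>m m n) $$ (i,l) = sum_list (map (\<lambda>j. G j $$ (i,l)) [1..<Suc r])"
        by (rule foldr_index) (use Gc i l in auto)
      also have "\<dots> = (\<Sum>j\<in>{1..r}. G j $$ (i,l))"
        by (simp only: interv_sum_list_conv_sum_set_nat set_upt atLeastLessThanSuc_atLeastAtMost)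
      also have "\<dots> = (\<Sum>j\<in>{1..r}. complex_of_real (gap r lam j * (if i < ksum mu j then 1 else 0))) * (if i = l then 1 else 0)"
        unfolding G_def sum_distrib_right using i l by (intro sum.cong) auto
      also have "(\<Sum>j\<in>{1..r}. complex_of_real (gap r lam j * (if i < ksum mu j then 1 else 0)))
          = (\<Sum>j\<in>{1..r}. if ksum mu (j - 1) \<le> i \<and> i < ksum mu j then complex_of_real (lam j) else 0)"
      proof -
        have "(\<Sum>j\<in>{1..r}. complex_of_real (gap r lam j * (if i < ksum mu j then 1 else 0)))
            = complex_of_real (\<Sum>j\<in>{1..r}. gap r lam j * (if i < ksum mu j then 1 else 0))"
          by (simp only: of_real_sum)
        also have "\<dots> = complex_of_real (\<Sum>j\<in>{1..r}. if ksum mu (j - 1) \<le> i \<and> i < ksum mu j then lam j else 0)"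
          by (simp only: telescope)
        also have "\<dots> = (\<Sum>j\<in>{1..r}. complex_of_real (if ksum mu (j - 1) \<le> i \<and> i < ksum mu j then lam j else 0))"
          by (simp only: of_real_sum)
        also have "\<dots> = (\<Sum>j\<in>{1..r}. if ksum mu (j - 1) \<le> i \<and> i < ksum mu j then complex_of_real (lam j) else 0)"
          by (intro sum.cong) auto
        finally show ?thesis .
      qed
      also have "(\<Sum>j\<in>{1..r}. if ksum mu (j - 1) \<le> i \<and> i < ksum mu j then complex_of_real (lam j) else 0) * (if i = l then 1 else 0)
          = svd_diag m n r lam mu $$ (i,l)"
        unfolding svd_diag_def using i l by simp
      finally show "foldr (+) (map G [1..<Suc r]) (0\<^sub>m m n) $$ (i,l) = svd_diag m n r lam mu $$ (i,l)" .
    qed (use foldr_carrier[of "[1..<Suc r]" G m n] Gc in \<open>auto simp: svd_diag_def\<close>)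
    finally show ?thesis using Ceq by simp
  qed
  have p1c: "\<forall>i j. i \<le> j \<and> j < length cs \<longrightarrow> innerV (cs ! i) (cs ! j) = nuclear_norm (cs ! i) * spectral_norm (cs ! j)"
  proof (intro allI impI)
    fix i j assume ij: "i \<le> j \<and> j < length cs"
    hence i: "i < r" and j: "j < r" and ij': "i \<le> j" using lcs by auto
    have ki: "ksum mu (Suc i) \<le> ksum mu (Suc j)" using ij' by (intro ksum_mono) auto
    have "innerV (cs ! i) (cs ! j) = real (min (ksum mu (Suc i)) (ksum mu (Suc j))) * gap r lam (Suc i) * gap r lam (Suc j)"
      unfolding csn[OF i] csn[OF j] Cp using BB_inner[OF W U k_le k_le] i j by simp
    also have "\<dots> = nuclear_norm (cs ! i) * spectral_norm (cs ! j)"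
      unfolding csn[OF i] csn[OF j] using norms[of "Suc i"] norms[of "Suc j"] i j ki by (simp add: min_def)
    finally show "innerV (cs ! i) (cs ! j) = nuclear_norm (cs ! i) * spectral_norm (cs ! j)" .
  qed
  have p1d: "\<forall>i. Suc i < length cs \<longrightarrow> slope nuclear_norm spectral_norm (cs ! i) > slope nuclear_norm spectral_norm (cs ! Suc i)"
  proof (intro allI impI)
    fix i assume "Suc i < length cs"
    hence i: "Suc i < r" using lcs by simp
    have sl: "slope nuclear_norm spectral_norm (cs ! p) = 1 / real (ksum mu (Suc p))" if "p < r" for p
    proof -
      have "Suc p \<in> {1..r}" using that by simp
      thus ?thesis unfolding slope_def csn[OF that] using norms[of "Suc p"] gpos[of "Suc p"] by simp
    qed
    have f1: "ksum mu (Suc i) < ksum mu (Suc (Suc i))" using k_strict i by simp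
    have f2: "1 \<le> ksum mu (Suc i)" using k_pos[of "Suc i"] i by simp
    show "slope nuclear_norm spectral_norm (cs ! i) > slope nuclear_norm spectral_norm (cs ! Suc i)"
    proof -
      have ir: "i < r" using i by simp
      show ?thesis unfolding sl[OF ir] sl[OF i] using f1 f2 by (simp add: frac_less2)
    qed
  qed
  have part1: "slope_decomp nuclear_norm spectral_norm m n C cs"
    unfolding slope_decomp_def using p1a p1b p1c p1d by blast
  show ?thesis using part1 part2 part3 unfolding cs_def by blast
qed


end
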